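(* Let $n\ge 1$. Every element of the inverse braid monoid of the sphere $IBr_n(S^2)$ can be written uniquely in the form $$(\sigma_{i_1}\sigma_{i_1-1}\cdots\sigma_1)(\sigma_{i_2}\cdots\sigma_2)\cdots(\sigma_{i_k}\cdots\sigma_k)\;\epsilon_{k+1,n}\,x\,\epsilon_{k+1,n}\;(\sigma_k\sigma_{k+1}\cdots\sigma_{j_k})\cdots(\sigma_1\sigma_2\cdots\sigma_{j_1}),$$ where $k\in\{0,\dots,n\}$, $0\le i_1<\dots<i_k\le n-1$, $0\le j_1<\dots<j_k\le n-1$, each block $\sigma_{i_r}\cdots\sigma_r$ (resp. $\sigma_r\cdots\sigma_{j_r}$) is the descending (resp. ascending) product of consecutive generators and is empty when $i_r=r-1$ (resp. $j_r=r-1$), and $x$ is an element of the sphere braid group $Br_k(S^2)$ on the first $k$ strings (a word in $\sigma_1^{\pm1},\dots,\sigma_{k-1}^{\pm1}$), with $k$, the indices and the element $x\in Br_k(S^2)$ uniquely determined; writing $x$ in the Gillette–Van Buskirk (Markov-type) normal form of $Br_k(S^2)$ gives a unique normal form word.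
   Context: $IBr_n(S^2)$ is the monoid of partial braids on the sphere: isotopy classes of braids in $S^2\times[0,1]$ on $n$ base points from which some strings may be deleted; the product is concatenation followed by deletion of all strings that are not complete, and the product is written left to right. $\sigma_i$ ($1\le i\le n-1$) is the standard generator crossing strings $i$ and $i+1$, $\epsilon_i$ is the trivial braid with the $i$th string deleted, and $\epsilon_{k+1,n}=\epsilon_{k+1}\epsilon_{k+2}\cdots\epsilon_n$ is the trivial braid on the first $k$ strings with strings $k+1,\dots,n$ deleted ($\epsilon_{n+1,n}=1$). $Br_k(S^2)$ is the $k$-string braid group of the sphere. *)

theory Defs
  imports "HOL-Analysis.Analysis"
begin

text \<open>The sphere S^2 is the unit sphere in real^3.  A configuration of strings
indexed by a finite set A of labels is a map c :: nat => real^3 sending A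
injectively into S^2 (and every label outside A to 0).  A partial braid with
string set A is a path in the configuration space of A starting at the base
configuration and ending at base points.  Isotopy classes of partial braids are
homotopy classes of such paths (rel endpoints) in the configuration space.\<close>

definition S2 :: "(real^3) set" where
  "S2 = sphere 0 1"

definition bp_angle :: "nat \<Rightarrow> real" where
  "bp_angle i = pi - pi / real i"

text \<open>Base points: the i-th base point lies on the equator at angle bp_angle i.
Labels 1,2,3,... are used; the base points are in this order along an arc of
the equator.\<close>
definition bp :: "nat \<Rightarrow> real^3" where
  "bp i = vector [cos (bp_angle i), sin (bp_angle i), 0]"

definition conf :: "nat set \<Rightarrow> (nat \<Rightarrow> real^3) set" where
  "conf A = {c. (\<forall>a\<in>A. c a \<in> S2) \<and> inj_on c A \<and> (\<forall>a. a \<notin> A \<longrightarrow> c a = 0)}"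

definition base :: "nat set \<Rightarrow> nat \<Rightarrow> real^3" where
  "base A = (\<lambda>a. if a \<in> A then bp a else 0)"

definition pbraid_rep :: "nat set \<Rightarrow> (real \<Rightarrow> nat \<Rightarrow> real^3) \<Rightarrow> bool" where
  "pbraid_rep A \<gamma> \<longleftrightarrow> finite A \<and> path \<gamma> \<and> path_image \<gamma> \<subseteq> conf A \<and>
     pathstart \<gamma> = base A \<and> (\<forall>a\<in>A. pathfinish \<gamma> a \<in> range bp)"

definition pclass :: "(real \<Rightarrow> nat \<Rightarrow> real^3) \<Rightarrow> (real \<Rightarrow> nat \<Rightarrow> real^3) set" where
  "pclass \<gamma> = {\<delta>. \<exists>A. pbraid_rep A \<gamma> \<and> homotopic_paths (conf A) \<gamma> \<delta>}"

definition IBr :: "nat \<Rightarrow> (real \<Rightarrow> nat \<Rightarrow> real^3) set set" where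
  "IBr n = {pclass \<gamma> | \<gamma> A. pbraid_rep A \<gamma> \<and> A \<subseteq> {1..n} \<and>
              (\<forall>a\<in>A. pathfinish \<gamma> a \<in> bp ` {1..n})}"

definition Br :: "nat \<Rightarrow> (real \<Rightarrow> nat \<Rightarrow> real^3) set set" where
  "Br k = {pclass \<gamma> | \<gamma>. pbraid_rep {1..k} \<gamma> \<and>
              (\<forall>a\<in>{1..k}. pathfinish \<gamma> a \<in> bp ` {1..k})}"

text \<open>Composition of representatives: follow gamma, keep only the strings that
end at a base point where a string of delta starts, and continue them along
delta.  The product is written left to right.\<close>
definition pcomp_dom :: "(real \<Rightarrow> nat \<Rightarrow> real^3) \<Rightarrow> (real \<Rightarrow> nat \<Rightarrow> real^3) \<Rightarrow> nat set" where
  "pcomp_dom \<gamma> \<delta> = {a. pathstart \<gamma> a \<noteq> 0 \<and>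
      (\<exists>c. pathfinish \<gamma> a = bp c \<and> pathstart \<delta> c \<noteq> 0)}"

definition pcomp :: "(real \<Rightarrow> nat \<Rightarrow> real^3) \<Rightarrow> (real \<Rightarrow> nat \<Rightarrow> real^3) \<Rightarrow> real \<Rightarrow> nat \<Rightarrow> real^3" where
  "pcomp \<gamma> \<delta> =
     (\<lambda>t a. if a \<in> pcomp_dom \<gamma> \<delta> then \<gamma> t a else 0) +++
     (\<lambda>t a. if a \<in> pcomp_dom \<gamma> \<delta> then \<delta> t (inv bp (pathfinish \<gamma> a)) else 0)"

definition pmult :: "(real \<Rightarrow> nat \<Rightarrow> real^3) set \<Rightarrow> (real \<Rightarrow> nat \<Rightarrow> real^3) set \<Rightarrow> (real \<Rightarrow> nat \<Rightarrow> real^3) set"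
  (infixl "\<cdot>\<^sub>p" 70) where
  "X \<cdot>\<^sub>p Y = \<Union>{pclass (pcomp \<gamma> \<delta>) | \<gamma> \<delta>. \<gamma> \<in> X \<and> \<delta> \<in> Y}"

definition pone :: "nat \<Rightarrow> (real \<Rightarrow> nat \<Rightarrow> real^3) set" where
  "pone n = pclass (\<lambda>t. base {1..n})"

definition peps :: "nat \<Rightarrow> nat \<Rightarrow> (real \<Rightarrow> nat \<Rightarrow> real^3) set" where
  "peps n i = pclass (\<lambda>t. base ({1..n} - {i}))"

text \<open>Rotation of the equatorial point at angle alpha by angle phi about the
axis through the equatorial point at angle m.\<close>
definition rot_eq :: "real \<Rightarrow> real \<Rightarrow> real \<Rightarrow> real^3" where
  "rot_eq m \<phi> \<alpha> = vector
     [cos (\<alpha> - m) * cos m - sin (\<alpha> - m) * cos \<phi> * sin m,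
      cos (\<alpha> - m) * sin m + sin (\<alpha> - m) * cos \<phi> * cos m,
      sin (\<alpha> - m) * sin \<phi>]"

text \<open>sigma_i in IBr_n(S^2): strings i and i+1 exchange by a half twist (a
rotation by pi about the axis through the midpoint of the arc between them);
all other strings 1..n are constant.\<close>
definition psigma :: "nat \<Rightarrow> nat \<Rightarrow> (real \<Rightarrow> nat \<Rightarrow> real^3) set" where
  "psigma n i = pclass (\<lambda>t a.
      if a \<in> {i, i+1} then rot_eq ((bp_angle i + bp_angle (i+1)) / 2) (pi * t) (bp_angle a)
      else base {1..n} a)"

definition pprod :: "nat \<Rightarrow> (real \<Rightarrow> nat \<Rightarrow> real^3) set list \<Rightarrow> (real \<Rightarrow> nat \<Rightarrow> real^3) set" where
  "pprod n xs = foldl (\<cdot>\<^sub>p) (pone n) xs"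

definition peps_range :: "nat \<Rightarrow> nat \<Rightarrow> (real \<Rightarrow> nat \<Rightarrow> real^3) set" where
  "peps_range n k = pprod n (map (peps n) [k+1..<n+1])"

definition desc_block :: "nat \<Rightarrow> nat \<Rightarrow> nat \<Rightarrow> (real \<Rightarrow> nat \<Rightarrow> real^3) set" where
  "desc_block n i r = pprod n (map (psigma n) (rev [r..<i+1]))"

definition asc_block :: "nat \<Rightarrow> nat \<Rightarrow> nat \<Rightarrow> (real \<Rightarrow> nat \<Rightarrow> real^3) set" where
  "asc_block n r j = pprod n (map (psigma n) [r..<j+1])"

text \<open>The normal form word: I = [i_1,...,i_k], J = [j_1,...,j_k].\<close>
definition normal_form ::
  "nat \<Rightarrow> nat \<Rightarrow> nat list \<Rightarrow> nat list \<Rightarrow> (real \<Rightarrow> nat \<Rightarrow> real^3) set \<Rightarrow> (real \<Rightarrow> nat \<Rightarrow> real^3) set" where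
  "normal_form n k I J x =
     pprod n (map (\<lambda>r. desc_block n (I ! (r - 1)) r) [1..<k+1]) \<cdot>\<^sub>p
     peps_range n k \<cdot>\<^sub>p x \<cdot>\<^sub>p peps_range n k \<cdot>\<^sub>p
     pprod n (map (\<lambda>r. asc_block n r (J ! (r - 1))) (rev [1..<k+1]))"

end

theory Submission
  imports Defs
begin


type_synonym cfg = "nat \<Rightarrow> real^3"
type_synonym pth = "real \<Rightarrow> cfg"

lemma norm3_eq1: "norm (v::real^3) = 1 \<longleftrightarrow> (v$1)^2 + (v$2)^2 + (v$3)^2 = 1"
  by (simp add: norm_eq_1 inner_vec_def sum_3 power2_eq_square)

lemma bp_S2: "bp i \<in> S2"
  by (simp add: S2_def bp_def norm3_eq1)

lemma bp_nz: "bp i \<noteq> 0"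
  using bp_S2[of i] by (auto simp: S2_def)

lemma bp_angle_rng: "0 \<le> bp_angle i \<and> bp_angle i \<le> pi"
proof (cases "i = 0")
  case False
  then have "real i \<ge> 1" by simp
  then have "pi / real i \<le> pi" "pi / real i \<ge> 0"
    by (simp_all add: divide_le_eq pi_gt_zero less_imp_le)
  then show ?thesis by (simp add: bp_angle_def)
qed (simp add: bp_angle_def)

lemma bp_angle_inj: "bp_angle i = bp_angle j \<Longrightarrow> i = j"
proof -
  assume "bp_angle i = bp_angle j"
  then have e: "pi / real i = pi / real j" by (simp add: bp_angle_def)
  show "i = j"
  proof (cases "i = 0 \<or> j = 0")
    case True then show ?thesis using e pi_gt_zero by (auto simp: divide_eq_0_iff)
  next
    case False then show ?thesis using e pi_gt_zero by (simp add: field_simps)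
  qed
qed

lemma bp_inj: "inj bp"
proof (rule injI)
  fix i j assume e: "bp i = bp j"
  have "(bp i)$1 = (bp j)$1" by (simp only: e)
  then have "cos (bp_angle i) = cos (bp_angle j)"
    by (simp add: bp_def)
  then have "bp_angle i = bp_angle j"
    using bp_angle_rng[of i] bp_angle_rng[of j] cos_inj_pi[of "bp_angle i" "bp_angle j"] by auto
  then show "i = j" by (rule bp_angle_inj)
qed

lemma inv_bp [simp]: "inv bp (bp c) = c"
  by (simp add: bp_inj)

lemma bp_eq_iff [simp]: "bp a = bp b \<longleftrightarrow> a = b"
  using bp_inj by (auto dest: injD)


section \<open>Relabelling\<close>

definition rl :: "(nat \<Rightarrow> nat) \<Rightarrow> nat set \<Rightarrow> cfg \<Rightarrow> cfg" where
  "rl h X c = (\<lambda>b. if b \<in> X then c (h b) else 0)"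

lemma rl_cont: "continuous_on U (rl h X)"
proof (rule continuous_on_coordinatewise_then_product)
  fix b
  show "continuous_on U (\<lambda>c. rl h X c b)"
  proof (cases "b \<in> X")
    case True
    then have "(\<lambda>c. rl h X c b) = (\<lambda>c. c (h b))" by (simp add: rl_def fun_eq_iff)
    moreover have "continuous_on U (\<lambda>c. c (h b))"
      by (rule continuous_on_subset[OF continuous_on_product_coordinates]) simp
    ultimately show ?thesis by metis
  next
    case False
    then show ?thesis by (simp add: rl_def)
  qed
qed

lemma rl_conf: "inj_on h X \<Longrightarrow> h ` X \<subseteq> A \<Longrightarrow> c \<in> conf A \<Longrightarrow> rl h X c \<in> conf X"
  by (auto simp: conf_def rl_def inj_on_def image_subset_iff)

lemma rl_conf_funcset: "inj_on h X \<Longrightarrow> h ` X \<subseteq> A \<Longrightarrow> rl h X \<in> conf A \<rightarrow> conf X"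
  using rl_conf by blast

lemma path_rl: "path p \<Longrightarrow> path (rl h X \<circ> p)"
  by (metis continuous_on_subset path_continuous_image rl_cont subset_UNIV)

lemma base_nz_iff: "base A a \<noteq> 0 \<longleftrightarrow> a \<in> A"
  by (simp add: base_def bp_nz)

lemma base_conf: "base A \<in> conf A"
  by (auto simp: conf_def base_def bp_S2 inj_on_def)

lemma rep_start_iff: "pbraid_rep A \<gamma> \<Longrightarrow> pathstart \<gamma> a \<noteq> 0 \<longleftrightarrow> a \<in> A"
  by (simp add: pbraid_rep_def base_nz_iff)

lemma rep_unique: "pbraid_rep A \<gamma> \<Longrightarrow> pbraid_rep B \<gamma> \<Longrightarrow> A = B"
  using rep_start_iff by blast

lemma rep_conf: "pbraid_rep A \<gamma> \<Longrightarrow> t \<in> {0..1} \<Longrightarrow> \<gamma> t \<in> conf A"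
  by (auto simp: pbraid_rep_def path_image_def)

lemma rep_finish_conf: "pbraid_rep A \<gamma> \<Longrightarrow> pathfinish \<gamma> \<in> conf A"
  by (auto simp: pathfinish_def rep_conf)

definition fin :: "pth \<Rightarrow> nat \<Rightarrow> nat" where
  "fin \<gamma> a = inv bp (pathfinish \<gamma> a)"

lemma rep_fin: "pbraid_rep A \<gamma> \<Longrightarrow> a \<in> A \<Longrightarrow> pathfinish \<gamma> a = bp (fin \<gamma> a)"
  unfolding pbraid_rep_def fin_def by (metis f_inv_into_f)

lemma rep_fin_inj: "pbraid_rep A \<gamma> \<Longrightarrow> inj_on (fin \<gamma>) A"
proof (rule inj_onI)
  fix a b assume r: "pbraid_rep A \<gamma>" and ab: "a \<in> A" "b \<in> A" "fin \<gamma> a = fin \<gamma> b"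
  then have "pathfinish \<gamma> a = pathfinish \<gamma> b" using rep_fin by metis
  moreover have "inj_on (pathfinish \<gamma>) A" using rep_finish_conf[OF r] by (simp add: conf_def)
  ultimately show "a = b" using ab by (auto dest: inj_onD)
qed

lemma pclass_self: "pbraid_rep A \<gamma> \<Longrightarrow> \<gamma> \<in> pclass \<gamma>"
  by (auto simp: pclass_def pbraid_rep_def)

lemma hom_rep: "pbraid_rep A \<gamma> \<Longrightarrow> homotopic_paths (conf A) \<gamma> \<delta> \<Longrightarrow> pbraid_rep A \<delta>"
  unfolding pbraid_rep_def
  using homotopic_paths_imp_path homotopic_paths_imp_subset homotopic_paths_imp_pathstart
    homotopic_paths_imp_pathfinish by metis

lemma pclass_memD: "\<delta> \<in> pclass \<gamma> \<Longrightarrow> pbraid_rep A \<gamma> \<Longrightarrow> homotopic_paths (conf A) \<gamma> \<delta>"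
  unfolding pclass_def using rep_unique by blast

lemma pclass_eqI: "pbraid_rep A \<gamma> \<Longrightarrow> homotopic_paths (conf A) \<gamma> \<delta> \<Longrightarrow> pclass \<delta> = pclass \<gamma>"
proof -
  assume r: "pbraid_rep A \<gamma>" and h: "homotopic_paths (conf A) \<gamma> \<delta>"
  have r': "pbraid_rep A \<delta>" by (rule hom_rep[OF r h])
  show ?thesis
  proof (rule set_eqI)
    fix \<epsilon>
    have "\<epsilon> \<in> pclass \<delta> \<longleftrightarrow> homotopic_paths (conf A) \<delta> \<epsilon>"
      using r' pclass_memD unfolding pclass_def by blast
    also have "\<dots> \<longleftrightarrow> homotopic_paths (conf A) \<gamma> \<epsilon>"
      using h homotopic_paths_trans homotopic_paths_sym by metis
    also have "\<dots> \<longleftrightarrow> \<epsilon> \<in> pclass \<gamma>"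
      using r pclass_memD unfolding pclass_def by blast
    finally show "\<epsilon> \<in> pclass \<delta> \<longleftrightarrow> \<epsilon> \<in> pclass \<gamma>" .
  qed
qed

lemma pclass_memD': "\<delta> \<in> pclass \<gamma> \<Longrightarrow> pbraid_rep A \<gamma> \<Longrightarrow> pbraid_rep A \<delta> \<and> pclass \<delta> = pclass \<gamma>"
  using pclass_memD pclass_eqI hom_rep by metis

section \<open>Composition\<close>

lemma pcomp_eq: "pcomp \<gamma> \<delta> = (rl id (pcomp_dom \<gamma> \<delta>) \<circ> \<gamma>) +++ (rl (fin \<gamma>) (pcomp_dom \<gamma> \<delta>) \<circ> \<delta>)"
  unfolding pcomp_def joinpaths_def rl_def fin_def by (simp add: fun_eq_iff)

lemma pcomp_dom_sub: "pbraid_rep A \<gamma> \<Longrightarrow> pcomp_dom \<gamma> \<delta> \<subseteq> A"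
  unfolding pcomp_dom_def using rep_start_iff by blast

lemma pcomp_dom_iff: "pbraid_rep A \<gamma> \<Longrightarrow> pbraid_rep B \<delta> \<Longrightarrow>
   a \<in> pcomp_dom \<gamma> \<delta> \<longleftrightarrow> a \<in> A \<and> fin \<gamma> a \<in> B"
proof -
  assume r1: "pbraid_rep A \<gamma>" and r2: "pbraid_rep B \<delta>"
  show ?thesis
  proof (cases "a \<in> A")
    case True
    then show ?thesis unfolding pcomp_dom_def
      using rep_start_iff[OF r1] rep_start_iff[OF r2] rep_fin[OF r1 True] by auto
  next
    case False
    then show ?thesis unfolding pcomp_dom_def using rep_start_iff[OF r1] by auto
  qed
qed

lemma pcomp_rep:
  assumes r1: "pbraid_rep A \<gamma>" and r2: "pbraid_rep B \<delta>"
  shows "pbraid_rep (pcomp_dom \<gamma> \<delta>) (pcomp \<gamma> \<delta>)"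
proof -
  let ?D = "pcomp_dom \<gamma> \<delta>"
  have DA: "?D \<subseteq> A" by (rule pcomp_dom_sub[OF r1])
  have Dfin: "a \<in> ?D \<Longrightarrow> a \<in> A \<and> fin \<gamma> a \<in> B" for a using pcomp_dom_iff[OF r1 r2] by blast
  have inj1: "inj_on id ?D" by simp
  have inj2: "inj_on (fin \<gamma>) ?D" using inj_on_subset[OF rep_fin_inj[OF r1] DA] .
  have im2: "fin \<gamma> ` ?D \<subseteq> B" using Dfin by blast
  have match: "pathfinish (rl id ?D \<circ> \<gamma>) = pathstart (rl (fin \<gamma>) ?D \<circ> \<delta>)"
  proof -
    have "pathfinish \<gamma> a = base B (fin \<gamma> a)" if "a \<in> ?D" for a
      using Dfin[OF that] rep_fin[OF r1] by (simp add: base_def)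
    moreover have "pathstart \<delta> = base B" using r2 by (simp add: pbraid_rep_def)
    ultimately show ?thesis unfolding pathfinish_compose pathstart_compose
      by (auto simp: rl_def fun_eq_iff)
  qed
  have p1: "path (rl id ?D \<circ> \<gamma>)" "path (rl (fin \<gamma>) ?D \<circ> \<delta>)"
    using r1 r2 by (auto simp: pbraid_rep_def intro: path_rl)
  have i1: "path_image (rl id ?D \<circ> \<gamma>) \<subseteq> conf ?D"
    using r1 DA unfolding path_image_compose pbraid_rep_def by (auto intro!: rl_conf[of id _ A])
  have i2: "path_image (rl (fin \<gamma>) ?D \<circ> \<delta>) \<subseteq> conf ?D"
    using r2 inj2 im2 unfolding path_image_compose pbraid_rep_def by (auto intro!: rl_conf[of "fin \<gamma>" _ B])
  have st: "pathstart (pcomp \<gamma> \<delta>) = base ?D"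
    using r1 DA unfolding pcomp_eq pathstart_join pathstart_compose
    by (auto simp: rl_def fun_eq_iff pbraid_rep_def base_def)
  have fi: "\<forall>a\<in>?D. pathfinish (pcomp \<gamma> \<delta>) a \<in> range bp"
    using r2 Dfin unfolding pcomp_eq pathfinish_join pathfinish_compose
    by (auto simp: rl_def pbraid_rep_def)
  show ?thesis
    unfolding pbraid_rep_def
    using r1 DA finite_subset p1 match i1 i2 st fi path_image_join_subset[of "rl id ?D \<circ> \<gamma>" "rl (fin \<gamma>) ?D \<circ> \<delta>"]
    by (auto simp: pbraid_rep_def pcomp_eq)
qed

lemma pcomp_dom_cong: "pathstart \<gamma> = pathstart \<gamma>' \<Longrightarrow> pathfinish \<gamma> = pathfinish \<gamma>' \<Longrightarrow>
   pathstart \<delta> = pathstart \<delta>' \<Longrightarrow> pcomp_dom \<gamma> \<delta> = pcomp_dom \<gamma>' \<delta>'"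
  by (simp add: pcomp_dom_def)

lemma pcomp_hom:
  assumes r1: "pbraid_rep A \<gamma>" and r2: "pbraid_rep B \<delta>"
    and h1: "homotopic_paths (conf A) \<gamma> \<gamma>'" and h2: "homotopic_paths (conf B) \<delta> \<delta>'"
  shows "homotopic_paths (conf (pcomp_dom \<gamma> \<delta>)) (pcomp \<gamma> \<delta>) (pcomp \<gamma>' \<delta>')"
proof -
  let ?D = "pcomp_dom \<gamma> \<delta>"
  have D: "pcomp_dom \<gamma>' \<delta>' = ?D"
    using h1 h2 by (metis homotopic_paths_imp_pathstart homotopic_paths_imp_pathfinish pcomp_dom_cong)
  have F: "fin \<gamma>' = fin \<gamma>" using homotopic_paths_imp_pathfinish[OF h1] unfolding fin_def by simp
  have DA: "?D \<subseteq> A" by (rule pcomp_dom_sub[OF r1])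
  have Dfin: "a \<in> ?D \<Longrightarrow> a \<in> A \<and> fin \<gamma> a \<in> B" for a using pcomp_dom_iff[OF r1 r2] by blast
  have inj2: "inj_on (fin \<gamma>) ?D" using inj_on_subset[OF rep_fin_inj[OF r1] DA] .
  have im2: "fin \<gamma> ` ?D \<subseteq> B" using Dfin by blast
  have a: "homotopic_paths (conf ?D) (rl id ?D \<circ> \<gamma>) (rl id ?D \<circ> \<gamma>')"
    by (rule homotopic_paths_continuous_image[OF h1 rl_cont]) (use DA in \<open>auto intro!: rl_conf[of id _ A]\<close>)
  have b: "homotopic_paths (conf ?D) (rl (fin \<gamma>) ?D \<circ> \<delta>) (rl (fin \<gamma>) ?D \<circ> \<delta>')"
    by (rule homotopic_paths_continuous_image[OF h2 rl_cont]) (use inj2 im2 in \<open>auto intro!: rl_conf[of "fin \<gamma>" _ B]\<close>)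
  have match: "pathfinish (rl id ?D \<circ> \<gamma>) = pathstart (rl (fin \<gamma>) ?D \<circ> \<delta>)"
  proof -
    have "pathfinish \<gamma> a = base B (fin \<gamma> a)" if "a \<in> ?D" for a
      using Dfin[OF that] rep_fin[OF r1] by (simp add: base_def)
    moreover have "pathstart \<delta> = base B" using r2 by (simp add: pbraid_rep_def)
    ultimately show ?thesis unfolding pathfinish_compose pathstart_compose
      by (auto simp: rl_def fun_eq_iff)
  qed
  show ?thesis
    unfolding pcomp_eq D F using homotopic_paths_join[OF a b match] by simp
qed

lemma pmult_pclass:
  assumes r1: "pbraid_rep A \<gamma>" and r2: "pbraid_rep B \<delta>"
  shows "pclass \<gamma> \<cdot>\<^sub>p pclass \<delta> = pclass (pcomp \<gamma> \<delta>)"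
proof -
  have "pclass (pcomp \<gamma>' \<delta>') = pclass (pcomp \<gamma> \<delta>)" if "\<gamma>' \<in> pclass \<gamma>" "\<delta>' \<in> pclass \<delta>" for \<gamma>' \<delta>'
    using pclass_eqI[OF pcomp_rep[OF r1 r2] pcomp_hom[OF r1 r2]] pclass_memD that r1 r2 by blast
  then have "{pclass (pcomp \<gamma>' \<delta>') | \<gamma>' \<delta>'. \<gamma>' \<in> pclass \<gamma> \<and> \<delta>' \<in> pclass \<delta>} = {pclass (pcomp \<gamma> \<delta>)}"
    using pclass_self[OF r1] pclass_self[OF r2] by blast
  then show ?thesis unfolding pmult_def by simp
qed




lemma path_constc: "path (\<lambda>t. a)"
  by (simp add: path_def)

lemma rl_cong: "(\<And>b. b \<in> X \<Longrightarrow> h b = h' b) \<Longrightarrow> rl h X = rl h' X"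
  by (auto simp: rl_def fun_eq_iff)

lemma rl_rl: "(\<And>b. b \<in> X \<Longrightarrow> h b \<in> Y) \<Longrightarrow> rl h X \<circ> rl g Y = rl (g \<circ> h) X"
  by (auto simp: rl_def fun_eq_iff)

lemma rl_rl_path: "(\<And>b. b \<in> X \<Longrightarrow> h b \<in> Y) \<Longrightarrow> rl h X \<circ> (rl g Y \<circ> \<gamma>) = rl (g \<circ> h) X \<circ> \<gamma>"
proof -
  assume "\<And>b. b \<in> X \<Longrightarrow> h b \<in> Y"
  then have "rl h X \<circ> rl g Y = rl (g \<circ> h) X" by (rule rl_rl)
  then show ?thesis by (metis o_assoc)
qed

lemma rl_path: "pbraid_rep A \<gamma> \<Longrightarrow> path (rl h X \<circ> \<gamma>)"
  by (simp add: pbraid_rep_def path_rl)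

lemma rl_img: "pbraid_rep A \<gamma> \<Longrightarrow> inj_on h X \<Longrightarrow> h ` X \<subseteq> A \<Longrightarrow> path_image (rl h X \<circ> \<gamma>) \<subseteq> conf X"
  unfolding path_image_compose pbraid_rep_def by (auto intro!: rl_conf[of h X A])

lemma rl_match:
  assumes "pbraid_rep A \<gamma>" "pbraid_rep B \<delta>" "\<And>b. b \<in> X \<Longrightarrow> h b \<in> A \<and> fin \<gamma> (h b) \<in> B"
  shows "pathfinish (rl h X \<circ> \<gamma>) = pathstart (rl (fin \<gamma> \<circ> h) X \<circ> \<delta>)"
proof -
  have "pathfinish \<gamma> (h b) = base B (fin \<gamma> (h b))" if "b \<in> X" for b
    using assms(3)[OF that] rep_fin[OF assms(1)] by (simp add: base_def)
  moreover have "pathstart \<delta> = base B" using assms(2) by (simp add: pbraid_rep_def)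
  ultimately show ?thesis unfolding pathfinish_compose pathstart_compose
    by (auto simp: rl_def fun_eq_iff)
qed

lemma rl_id_eq: "pbraid_rep A \<gamma> \<Longrightarrow> t \<in> {0..1} \<Longrightarrow> (rl id A \<circ> \<gamma>) t = \<gamma> t"
proof -
  assume "pbraid_rep A \<gamma>" "t \<in> {0..1}"
  then have "\<gamma> t \<in> conf A" by (rule rep_conf)
  then show ?thesis by (auto simp: rl_def conf_def fun_eq_iff)
qed

lemma rl_id_hom: "pbraid_rep A \<gamma> \<Longrightarrow> homotopic_paths (conf A) (rl id A \<circ> \<gamma>) \<gamma>"
proof (rule homotopic_paths_eq)
  assume r: "pbraid_rep A \<gamma>"
  show "path (rl id A \<circ> \<gamma>)" by (rule rl_path[OF r])
  show "path_image (rl id A \<circ> \<gamma>) \<subseteq> conf A" by (rule rl_img[OF r]) auto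
  show "(rl id A \<circ> \<gamma>) t = \<gamma> t" if "t \<in> {0..1}" for t by (rule rl_id_eq[OF r that])
qed

lemma fin_pcomp: "pbraid_rep A \<gamma> \<Longrightarrow> pbraid_rep B \<delta> \<Longrightarrow> a \<in> pcomp_dom \<gamma> \<delta> \<Longrightarrow>
   fin (pcomp \<gamma> \<delta>) a = fin \<delta> (fin \<gamma> a)"
  unfolding fin_def[of "pcomp \<gamma> \<delta>"] pcomp_eq[of \<gamma> \<delta>] pathfinish_join
  by (simp add: pathfinish_compose rl_def fin_def)

section \<open>Associativity\<close>

lemma pcomp_assoc:
  assumes r1: "pbraid_rep A \<gamma>" and r2: "pbraid_rep B \<delta>" and r3: "pbraid_rep C \<epsilon>"
  shows "pclass (pcomp (pcomp \<gamma> \<delta>) \<epsilon>) = pclass (pcomp \<gamma> (pcomp \<delta> \<epsilon>))"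
proof -
  define D1 where "D1 = pcomp_dom \<gamma> \<delta>"
  define E1 where "E1 = pcomp_dom \<delta> \<epsilon>"
  define D where "D = pcomp_dom (pcomp \<gamma> \<delta>) \<epsilon>"
  have e1: "pcomp \<gamma> \<delta> = (rl id D1 \<circ> \<gamma>) +++ (rl (fin \<gamma>) D1 \<circ> \<delta>)"
    unfolding D1_def by (rule pcomp_eq)
  have e2: "pcomp \<delta> \<epsilon> = (rl id E1 \<circ> \<delta>) +++ (rl (fin \<delta>) E1 \<circ> \<epsilon>)"
    unfolding E1_def by (rule pcomp_eq)
  let ?D1 = D1 and ?E1 = E1 and ?D = D
  have r12: "pbraid_rep ?D1 (pcomp \<gamma> \<delta>)" unfolding D1_def by (rule pcomp_rep[OF r1 r2])
  have r23: "pbraid_rep ?E1 (pcomp \<delta> \<epsilon>)" unfolding E1_def by (rule pcomp_rep[OF r2 r3])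
  have D1: "a \<in> ?D1 \<longleftrightarrow> a \<in> A \<and> fin \<gamma> a \<in> B" for a unfolding D1_def using pcomp_dom_iff[OF r1 r2] .
  have E1: "a \<in> ?E1 \<longleftrightarrow> a \<in> B \<and> fin \<delta> a \<in> C" for a unfolding E1_def using pcomp_dom_iff[OF r2 r3] .
  have fp: "a \<in> D1 \<Longrightarrow> fin (pcomp \<gamma> \<delta>) a = fin \<delta> (fin \<gamma> a)" for a
    unfolding D1_def by (rule fin_pcomp[OF r1 r2])
  have D: "a \<in> ?D \<longleftrightarrow> a \<in> A \<and> fin \<gamma> a \<in> B \<and> fin \<delta> (fin \<gamma> a) \<in> C" for a
    using pcomp_dom_iff[OF r12 r3, of a] D1 fp[of a] unfolding D_def by auto
  have D': "pcomp_dom \<gamma> (pcomp \<delta> \<epsilon>) = ?D"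
    using pcomp_dom_iff[OF r1 r23] D E1 by auto
  have DD1: "?D \<subseteq> ?D1" using D D1 by auto
  let ?p = "rl id ?D \<circ> \<gamma>" and ?q = "rl (fin \<gamma> \<circ> id) ?D \<circ> \<delta>"
    and ?r = "rl (fin \<delta> \<circ> (fin \<gamma> \<circ> id)) ?D \<circ> \<epsilon>"
  have L: "pcomp (pcomp \<gamma> \<delta>) \<epsilon> = (?p +++ ?q) +++ ?r"
  proof -
    have "rl id ?D \<circ> pcomp \<gamma> \<delta> = ?p +++ ?q"
      unfolding e1 path_compose_join
      using DD1 by (simp add: rl_rl_path subset_iff)
    moreover have "rl (fin (pcomp \<gamma> \<delta>)) ?D = rl (fin \<delta> \<circ> (fin \<gamma> \<circ> id)) ?D"
      by (rule rl_cong) (use DD1 fp in auto)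
    moreover have "pcomp (pcomp \<gamma> \<delta>) \<epsilon> = (rl id D \<circ> pcomp \<gamma> \<delta>) +++ (rl (fin (pcomp \<gamma> \<delta>)) D \<circ> \<epsilon>)"
      unfolding D_def by (rule pcomp_eq)
    ultimately show ?thesis by simp
  qed
  have R: "pcomp \<gamma> (pcomp \<delta> \<epsilon>) = ?p +++ (?q +++ ?r)"
  proof -
    have "rl (fin \<gamma>) ?D \<circ> pcomp \<delta> \<epsilon> = ?q +++ ?r"
    proof -
      have "\<And>b. b \<in> D \<Longrightarrow> fin \<gamma> b \<in> E1" using D E1 by auto
      then show ?thesis unfolding e2 path_compose_join by (simp add: rl_rl_path)
    qed
    moreover have "pcomp \<gamma> (pcomp \<delta> \<epsilon>) = (rl id D \<circ> \<gamma>) +++ (rl (fin \<gamma>) D \<circ> pcomp \<delta> \<epsilon>)"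
      using pcomp_eq[of \<gamma> "pcomp \<delta> \<epsilon>"] D' by simp
    ultimately show ?thesis by simp
  qed
  have injg: "inj_on (fin \<gamma>) ?D" using inj_on_subset[OF rep_fin_inj[OF r1]] D by blast
  have injd: "inj_on (fin \<delta>) (fin \<gamma> ` ?D)" using inj_on_subset[OF rep_fin_inj[OF r2]] D by blast
  have pp: "path ?p" "path ?q" "path ?r" using r1 r2 r3 by (auto simp: rl_path)
  have ip: "path_image ?p \<subseteq> conf ?D" by (rule rl_img[OF r1]) (use D in auto)
  have iq: "path_image ?q \<subseteq> conf ?D" by (rule rl_img[OF r2]) (use D injg in auto)
  have ir: "path_image ?r \<subseteq> conf ?D"
    by (rule rl_img[OF r3]) (use D injg injd in \<open>auto intro: comp_inj_on\<close>)
  have m1: "pathfinish ?p = pathstart ?q" by (rule rl_match[OF r1 r2]) (use D in auto)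
  have m2: "pathfinish ?q = pathstart ?r" 
    using rl_match[OF r2 r3, of ?D "fin \<gamma> \<circ> id"] D by (simp add: o_assoc)
  have "homotopic_paths (conf ?D) (?p +++ (?q +++ ?r)) ((?p +++ ?q) +++ ?r)"
    by (rule homotopic_paths_assoc) (use pp ip iq ir m1 m2 in auto)
  then show ?thesis
    using pclass_eqI[OF pcomp_rep[OF r12 r3]] L R homotopic_paths_sym unfolding D_def by metis
qed

section \<open>Identities\<close>

definition idp :: "nat set \<Rightarrow> pth" where "idp A = (\<lambda>t. base A)"

lemma rep_idp: "finite A \<Longrightarrow> pbraid_rep A (idp A)"
  using base_conf[of A] by (auto simp: pbraid_rep_def idp_def path_constc pathstart_def pathfinish_def base_def)

lemma fin_idp: "a \<in> A \<Longrightarrow> fin (idp A) a = a"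
  by (simp add: fin_def idp_def pathfinish_def base_def)

lemma hom_lid_const:
  assumes "path p" "path_image p \<subseteq> S"
  shows "homotopic_paths S ((\<lambda>t. pathstart p) +++ p) p"
proof -
  have c: "continuous_on {0..1} (\<lambda>t::real. if t \<le> 1/2 then 0 else 2 *\<^sub>R t - 1)"
    unfolding split_01
    by (rule continuous_on_cases continuous_intros | force simp: pathfinish_def joinpaths_def)+
  show ?thesis
    apply (rule homotopic_paths_sym)
    using assms unfolding pathstart_def joinpaths_def
    by (intro c continuous_on_cases continuous_intros homotopic_paths_reparametrize [where f = "\<lambda>t. if t \<le> 1/2 then 0 else 2 *\<^sub>R t - 1"]; force)
qed

lemma hom_rid_const:
  assumes "path p" "path_image p \<subseteq> S"
  shows "homotopic_paths S (p +++ (\<lambda>t. pathfinish p)) p"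
proof -
  have c: "continuous_on {0..1} (\<lambda>t::real. if t \<le> 1/2 then 2 *\<^sub>R t else 1)"
    unfolding split_01
    by (rule continuous_on_cases continuous_intros | force simp: pathfinish_def joinpaths_def)+
  show ?thesis
    apply (rule homotopic_paths_sym)
    using assms unfolding pathfinish_def joinpaths_def
    by (intro c continuous_on_cases continuous_intros homotopic_paths_reparametrize [where f = "\<lambda>t. if t \<le> 1/2 then 2 *\<^sub>R t else 1"]; force)
qed

lemma pcomp_lid:
  assumes r: "pbraid_rep A \<gamma>"
  shows "pclass (pcomp (idp A) \<gamma>) = pclass \<gamma>"
proof -
  have fA: "finite A" using r by (simp add: pbraid_rep_def)
  have ri: "pbraid_rep A (idp A)" by (rule rep_idp[OF fA])
  have D: "pcomp_dom (idp A) \<gamma> = A" using pcomp_dom_iff[OF ri r] fin_idp by auto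
  have e1: "rl id A \<circ> idp A = (\<lambda>t. pathstart (rl id A \<circ> \<gamma>))"
    using r by (auto simp: idp_def rl_def fun_eq_iff pathstart_def pbraid_rep_def base_def)
  have e2: "rl (fin (idp A)) A = rl id A" by (rule rl_cong) (simp add: fin_idp)
  have eq: "pcomp (idp A) \<gamma> = (\<lambda>t. pathstart (rl id A \<circ> \<gamma>)) +++ (rl id A \<circ> \<gamma>)"
    unfolding pcomp_eq D e1 e2 ..
  have "homotopic_paths (conf A) (pcomp (idp A) \<gamma>) (rl id A \<circ> \<gamma>)"
    unfolding eq by (rule hom_lid_const) (auto simp: rl_path[OF r] rl_img[OF r])
  then have "homotopic_paths (conf A) (pcomp (idp A) \<gamma>) \<gamma>"
    using rl_id_hom[OF r] homotopic_paths_trans by blast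
  then show ?thesis
    using pclass_eqI[OF pcomp_rep[OF ri r]] D homotopic_paths_sym by metis
qed

lemma pcomp_rid:
  assumes r: "pbraid_rep A \<gamma>" and fB: "finite B" and sub: "fin \<gamma> ` A \<subseteq> B"
  shows "pclass (pcomp \<gamma> (idp B)) = pclass \<gamma>"
proof -
  have ri: "pbraid_rep B (idp B)" by (rule rep_idp[OF fB])
  have D: "pcomp_dom \<gamma> (idp B) = A" using pcomp_dom_iff[OF r ri] sub by auto
  have e1: "rl (fin \<gamma>) A \<circ> idp B = (\<lambda>t. pathfinish (rl id A \<circ> \<gamma>))"
    using sub rep_fin[OF r] rep_finish_conf[OF r]
    by (auto simp: idp_def rl_def fun_eq_iff pathfinish_def base_def conf_def)
  have eq: "pcomp \<gamma> (idp B) = (rl id A \<circ> \<gamma>) +++ (\<lambda>t. pathfinish (rl id A \<circ> \<gamma>))"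
    unfolding pcomp_eq D e1 ..
  have "homotopic_paths (conf A) (pcomp \<gamma> (idp B)) (rl id A \<circ> \<gamma>)"
    unfolding eq by (rule hom_rid_const) (auto simp: rl_path[OF r] rl_img[OF r])
  then have "homotopic_paths (conf A) (pcomp \<gamma> (idp B)) \<gamma>"
    using rl_id_hom[OF r] homotopic_paths_trans by blast
  then show ?thesis
    using pclass_eqI[OF pcomp_rep[OF r ri]] D homotopic_paths_sym by metis
qed




lemma hom_rinv_const:
  assumes "path p" "path_image p \<subseteq> S"
    shows "homotopic_paths S (p +++ reversepath p) (\<lambda>t. pathstart p)"
proof -
  have p: "continuous_on {0..1} p" 
    using assms by (auto simp: path_def)
  let ?A = "{0..1} \<times> {0..1}"
  have "continuous_on ?A (\<lambda>x. ((\<lambda>t. p (fst x * t)) +++ reversepath ((\<lambda>t. p (fst x * t)))) (snd x))"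
    unfolding joinpaths_def reversepath_def path_def
  proof (rule continuous_on_cases_le)
    show "continuous_on {x \<in> ?A. snd x \<le> 1/2} (\<lambda>t. p (fst t * (2 * snd t)))"
         "continuous_on {x \<in> ?A. 1/2 \<le> snd x} (\<lambda>t. p (fst t * (1 - (2 * snd t - 1))))"
         "continuous_on ?A snd"
      by (intro continuous_on_compose2 [OF p] continuous_intros; auto simp: mult_le_one)+
  qed (auto simp: algebra_simps)
  then show ?thesis
    using assms
    apply (subst homotopic_paths_sym_eq)
    unfolding homotopic_paths_def homotopic_with_def
    apply (rule_tac x="(\<lambda>y. ((\<lambda>t. p (fst y * t)) +++ reversepath((\<lambda>t. p (fst y * t)))) (snd y))" in exI)
    apply (force simp: mult_le_one path_defs joinpaths_def reversepath_def)
    done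
qed

lemma hom_linv_const:
  assumes "path p" "path_image p \<subseteq> S"
    shows "homotopic_paths S (reversepath p +++ p) (\<lambda>t. pathfinish p)"
  using hom_rinv_const [of "reversepath p" S] assms by simp

definition rinv :: "nat set \<Rightarrow> pth \<Rightarrow> pth" where
  "rinv A \<gamma> = rl (the_inv_into A (fin \<gamma>)) (fin \<gamma> ` A) \<circ> reversepath \<gamma>"

lemma rep_rinv:
  assumes r: "pbraid_rep A \<gamma>"
  shows "pbraid_rep (fin \<gamma> ` A) (rinv A \<gamma>)"
proof -
  let ?F = "fin \<gamma> ` A" and ?g = "the_inv_into A (fin \<gamma>)"
  have inj: "inj_on (fin \<gamma>) A" by (rule rep_fin_inj[OF r])
  have ig: "inj_on ?g ?F" using inj by (rule inj_on_the_inv_into)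
  have gA: "?g ` ?F \<subseteq> A" using inj by (auto simp: the_inv_into_f_f)
  have pth: "path (rinv A \<gamma>)" using r by (simp add: rinv_def pbraid_rep_def path_rl)
  have img: "path_image (rinv A \<gamma>) \<subseteq> conf ?F"
    using r ig gA unfolding rinv_def path_image_compose path_image_reversepath pbraid_rep_def
    by (auto intro!: rl_conf[of ?g ?F A])
  have st: "pathstart (rinv A \<gamma>) = base ?F"
    using inj rep_fin[OF r] 
    by (auto simp: rinv_def pathstart_compose rl_def base_def fun_eq_iff the_inv_into_f_f)
  have fi: "\<forall>c\<in>?F. pathfinish (rinv A \<gamma>) c \<in> range bp"
    using r inj
    by (auto simp: rinv_def pathfinish_compose rl_def pbraid_rep_def base_def the_inv_into_f_f)
  show ?thesis using r pth img st fi by (auto simp: pbraid_rep_def)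
qed

lemma fin_rinv:
  assumes r: "pbraid_rep A \<gamma>" and a: "a \<in> A"
  shows "fin (rinv A \<gamma>) (fin \<gamma> a) = a"
proof -
  have inj: "inj_on (fin \<gamma>) A" by (rule rep_fin_inj[OF r])
  show ?thesis unfolding fin_def[of "rinv A \<gamma>"] using r a inj
    by (auto simp: rinv_def pathfinish_compose rl_def pbraid_rep_def base_def the_inv_into_f_f)
qed

lemma pcomp_rinv:
  assumes r: "pbraid_rep A \<gamma>"
  shows "pclass (pcomp \<gamma> (rinv A \<gamma>)) = pclass (idp A)"
proof -
  let ?F = "fin \<gamma> ` A" and ?g = "the_inv_into A (fin \<gamma>)"
  have inj: "inj_on (fin \<gamma>) A" by (rule rep_fin_inj[OF r])
  have ri: "pbraid_rep ?F (rinv A \<gamma>)" by (rule rep_rinv[OF r])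
  have D: "pcomp_dom \<gamma> (rinv A \<gamma>) = A" using pcomp_dom_iff[OF r ri] by auto
  let ?p = "rl id A \<circ> \<gamma>"
  have e2: "rl (fin \<gamma>) A \<circ> rinv A \<gamma> = reversepath ?p"
  proof -
    have "rl (fin \<gamma>) A \<circ> rinv A \<gamma> = rl (?g \<circ> fin \<gamma>) A \<circ> reversepath \<gamma>"
      unfolding rinv_def by (rule rl_rl_path) auto
    also have "rl (?g \<circ> fin \<gamma>) A = rl id A" by (rule rl_cong) (simp add: inj the_inv_into_f_f)
    finally show ?thesis by (simp add: reversepath_def o_def)
  qed
  have eq: "pcomp \<gamma> (rinv A \<gamma>) = ?p +++ reversepath ?p"
    using pcomp_eq[of \<gamma> "rinv A \<gamma>"] unfolding D e2 .
  have ps: "pathstart ?p = base A"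
    using r by (auto simp: pathstart_compose rl_def pbraid_rep_def base_def fun_eq_iff)
  have "homotopic_paths (conf A) (pcomp \<gamma> (rinv A \<gamma>)) (idp A)"
    unfolding eq idp_def ps[symmetric]
    by (rule hom_rinv_const) (auto simp: rl_path[OF r] rl_img[OF r])
  then show ?thesis
    using pclass_eqI[OF pcomp_rep[OF r ri]] D by metis
qed

lemma pcomp_linv:
  assumes r: "pbraid_rep A \<gamma>"
  shows "pclass (pcomp (rinv A \<gamma>) \<gamma>) = pclass (idp (fin \<gamma> ` A))"
proof -
  let ?F = "fin \<gamma> ` A" and ?g = "the_inv_into A (fin \<gamma>)"
  have inj: "inj_on (fin \<gamma>) A" by (rule rep_fin_inj[OF r])
  have ri: "pbraid_rep ?F (rinv A \<gamma>)" by (rule rep_rinv[OF r])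
  have fr: "c \<in> ?F \<Longrightarrow> fin (rinv A \<gamma>) c = ?g c" for c
    using fin_rinv[OF r] inj by (auto simp: the_inv_into_f_f)
  have D: "pcomp_dom (rinv A \<gamma>) \<gamma> = ?F"
    using pcomp_dom_iff[OF ri r] fr inj by (auto simp: the_inv_into_f_f)
  let ?q = "rl ?g ?F \<circ> \<gamma>"
  have e1: "rl id ?F \<circ> rinv A \<gamma> = reversepath ?q"
  proof -
    have "rl id ?F \<circ> rinv A \<gamma> = rl (?g \<circ> id) ?F \<circ> reversepath \<gamma>"
      unfolding rinv_def by (rule rl_rl_path) auto
    then show ?thesis by (simp add: reversepath_def o_def)
  qed
  have e2: "rl (fin (rinv A \<gamma>)) ?F = rl ?g ?F" by (rule rl_cong) (simp add: fr)
  have eq: "pcomp (rinv A \<gamma>) \<gamma> = reversepath ?q +++ ?q"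
    using pcomp_eq[of "rinv A \<gamma>" \<gamma>] unfolding D e1 e2 .
  have pf: "pathfinish ?q = base ?F"
    using inj rep_fin[OF r] 
    by (auto simp: pathfinish_compose rl_def base_def fun_eq_iff the_inv_into_f_f)
  have ig: "inj_on ?g ?F" using inj by (rule inj_on_the_inv_into)
  have gA: "?g ` ?F \<subseteq> A" using inj by (auto simp: the_inv_into_f_f)
  have "homotopic_paths (conf ?F) (pcomp (rinv A \<gamma>) \<gamma>) (idp ?F)"
    unfolding eq idp_def pf[symmetric]
    by (rule hom_linv_const) (use ig gA in \<open>auto simp: rl_path[OF r] rl_img[OF r]\<close>)
  then show ?thesis
    using pclass_eqI[OF pcomp_rep[OF ri r]] D by metis
qed




lemma half1: "(x::real) - (x+y)/2 = -((y-x)/2)" by (simp add: field_simps)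
lemma half2: "(y::real) - (x+y)/2 = (y-x)/2" by (simp add: field_simps)
lemma cos_abs': "cos \<bar>x::real\<bar> = cos x" by (cases "x \<ge> 0") simp_all

lemma half0: "2*(((x::real)+y)/2) = x + y" by simp
lemma half3: "2*(((x::real)+y)/2) - x = y" unfolding half0 by simp
lemma half4: "2*(((x::real)+y)/2) - y = x" unfolding half0 by simp

definition bpv :: "real \<Rightarrow> real^3" where "bpv \<alpha> = vector [cos \<alpha>, sin \<alpha>, 0]"

lemma bp_bpv: "bp i = bpv (bp_angle i)" by (simp add: bp_def bpv_def)

lemma vec3_eq: "(v::real^3) = w \<longleftrightarrow> v$1 = w$1 \<and> v$2 = w$2 \<and> v$3 = w$3"
  by (simp add: vec_eq_iff forall_3)

lemma rot0: "rot_eq m 0 \<alpha> = bpv \<alpha>"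
proof -
  have "cos (\<alpha> - m) * cos m - sin (\<alpha> - m) * sin m = cos \<alpha>" using cos_add[of "\<alpha>-m" m] by simp
  moreover have "cos (\<alpha> - m) * sin m + sin (\<alpha> - m) * cos m = sin \<alpha>" using sin_add[of "\<alpha>-m" m] by simp
  ultimately show ?thesis by (simp add: vec3_eq rot_eq_def bpv_def)
qed

lemma rotpi: "rot_eq m pi \<alpha> = bpv (2*m - \<alpha>)"
proof -
  have e: "2*m - \<alpha> = m - (\<alpha> - m)" by simp
  have "cos (\<alpha> - m) * cos m + sin (\<alpha> - m) * sin m = cos (2*m - \<alpha>)"
    unfolding e cos_diff by simp
  moreover have "cos (\<alpha> - m) * sin m - sin (\<alpha> - m) * cos m = sin (2*m - \<alpha>)"
    unfolding e sin_diff by simp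
  ultimately show ?thesis by (simp add: vec3_eq rot_eq_def bpv_def)
qed

lemma rot_S2: "rot_eq m \<phi> \<alpha> \<in> S2"
proof -
  let ?c = "cos (\<alpha> - m)" and ?s = "sin (\<alpha> - m)"
  have "(?c * cos m - ?s * cos \<phi> * sin m)^2 + (?c * sin m + ?s * cos \<phi> * cos m)^2 + (?s * sin \<phi>)^2
      = ?c^2 * ((sin m)^2 + (cos m)^2) + ?s^2 * ((cos \<phi>)^2 * ((sin m)^2 + (cos m)^2) + (sin \<phi>)^2)"
    by algebra
  also have "\<dots> = 1" by simp
  finally show ?thesis by (simp add: S2_def norm3_eq1 rot_eq_def)
qed

lemma bpv_S2: "bpv \<alpha> \<in> S2"
  by (simp add: S2_def bpv_def norm3_eq1)

definition proj :: "real \<Rightarrow> real^3 \<Rightarrow> real" where "proj m v = v$1 * cos m + v$2 * sin m"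

lemma proj_rot: "proj m (rot_eq m \<phi> \<alpha>) = cos (\<alpha> - m)"
proof -
  let ?c = "cos (\<alpha> - m)" and ?s = "sin (\<alpha> - m)"
  have "(?c * cos m - ?s * cos \<phi> * sin m) * cos m + (?c * sin m + ?s * cos \<phi> * cos m) * sin m
      = ?c * ((sin m)^2 + (cos m)^2)" by algebra
  then show ?thesis by (simp add: proj_def rot_eq_def)
qed

lemma proj_bpv: "proj m (bpv \<beta>) = cos (\<beta> - m)"
  by (simp add: proj_def bpv_def cos_diff)

lemma rot_pair_ne:
  assumes h: "0 < h" "h < pi"
  shows "rot_eq m \<phi> (m - h) \<noteq> rot_eq m \<phi> (m + h)"
proof
  assume e: "rot_eq m \<phi> (m - h) = rot_eq m \<phi> (m + h)"
  have sh: "sin h \<noteq> 0" using h sin_gt_zero by force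
  from e have e1: "sin h * cos \<phi> * sin m = 0" and e2: "sin h * cos \<phi> * cos m = 0" and e3: "sin h * sin \<phi> = 0"
    by (auto simp: vec3_eq rot_eq_def)
  from e1 e2 sh have "cos \<phi> * sin m = 0" "cos \<phi> * cos m = 0" by auto
  then have c: "cos \<phi> = 0"
  proof (cases "cos \<phi> = 0")
    case False
    with \<open>cos \<phi> * sin m = 0\<close> \<open>cos \<phi> * cos m = 0\<close> have "sin m = 0" "cos m = 0" by auto
    then show ?thesis using sin_cos_squared_add[of m] by simp
  qed
  from e3 sh have "sin \<phi> = 0" by simp
  with c show False using sin_cos_squared_add[of \<phi>] by simp
qed

lemma bp_angle_mono: "1 \<le> i \<Longrightarrow> i < j \<Longrightarrow> bp_angle i < bp_angle j"
proof -
  assume "1 \<le> i" "i < j"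
  then have "pi / real j < pi / real i"
    by (intro divide_strict_left_mono) auto
  then show ?thesis by (simp add: bp_angle_def)
qed

lemma bp_angle_lt_pi: "1 \<le> i \<Longrightarrow> bp_angle i < pi"
  by (simp add: bp_angle_def)

definition sgp :: "nat \<Rightarrow> nat \<Rightarrow> pth" where
  "sgp n i = (\<lambda>t a.
      if a \<in> {i, i+1} then rot_eq ((bp_angle i + bp_angle (i+1)) / 2) (pi * t) (bp_angle a)
      else base {1..n} a)"

lemma psigma_sgp: "psigma n i = pclass (sgp n i)"
  by (simp add: psigma_def sgp_def)

lemma rot_cont: "continuous_on S (\<lambda>t::real. rot_eq m (pi * t) \<alpha>)"
proof -
  have e: "(\<lambda>t. rot_eq m (pi * t) \<alpha>) = (\<lambda>t. cos (\<alpha> - m) *\<^sub>R vector [cos m, sin m, 0] +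
      (sin (\<alpha> - m) * cos (pi * t)) *\<^sub>R vector [- sin m, cos m, 0] +
      (sin (\<alpha> - m) * sin (pi * t)) *\<^sub>R (vector [0, 0, 1] :: real^3))"
    by (auto simp: fun_eq_iff vec3_eq rot_eq_def algebra_simps)
  show ?thesis unfolding e by (intro continuous_intros)
qed

lemma sgp_rep:
  assumes i: "1 \<le> i" "i + 1 \<le> n"
  shows "pbraid_rep {1..n} (sgp n i)"
proof -
  let ?m = "(bp_angle i + bp_angle (i+1)) / 2"
  let ?h = "(bp_angle (i+1) - bp_angle i) / 2"
  have lt: "bp_angle i < bp_angle (i+1)" using i by (intro bp_angle_mono) auto
  have h0: "0 < ?h" using lt by simp
  have hpi: "?h < pi" using bp_angle_rng[of i] bp_angle_lt_pi[of "i+1"] by simp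
  have ai: "bp_angle i = ?m - ?h" and ai1: "bp_angle (i+1) = ?m + ?h" by (simp_all add: field_simps)
  have cont: "path (sgp n i)"
    unfolding path_def
  proof (rule continuous_on_coordinatewise_then_product)
    fix a show "continuous_on {0..1} (\<lambda>t. sgp n i t a)"
      by (cases "a \<in> {i, i+1}") (auto simp: sgp_def rot_cont)
  qed
  have conf: "sgp n i t \<in> conf {1..n}" for t
  proof -
    let ?c = "sgp n i t"
    have S: "\<forall>a\<in>{1..n}. ?c a \<in> S2"
      by (auto simp: sgp_def rot_S2 base_def bp_S2)
    have Z: "\<forall>a. a \<notin> {1..n} \<longrightarrow> ?c a = 0"
      using i by (auto simp: sgp_def base_def)
    have other: "?c a = bp a" if "a \<notin> {i, i+1}" "a \<in> {1..n}" for a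
      using that by (simp add: sgp_def base_def)
    have rot: "?c a = rot_eq ?m (pi * t) (bp_angle a)" if "a \<in> {i, i+1}" for a
      using that by (simp add: sgp_def)
    have pr_rot: "proj ?m (?c a) = cos ?h" if "a \<in> {i, i+1}" for a
    proof -
      have "proj ?m (?c a) = cos (bp_angle a - ?m)" using that rot proj_rot by metis
      moreover have "cos (bp_angle a - ?m) = cos ?h"
      proof -
        have e1: "bp_angle i - ?m = - ?h" by (rule half1)
        have e2: "bp_angle (i+1) - ?m = ?h" by (rule half2)
        from that have "a = i \<or> a = i + 1" by simp
        then show ?thesis
        proof
          assume "a = i" then show ?thesis by (simp only: e1 cos_minus)
        next
          assume "a = i + 1" then show ?thesis by (simp only: e2)
        qed
      qed
      ultimately show ?thesis by simp
    qed
    have ne: "?c a \<noteq> ?c b" if "a \<in> {i, i+1}" "b \<notin> {i, i+1}" "b \<in> {1..n}" for a b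
    proof
      assume e: "?c a = ?c b"
      have "cos ?h = cos (bp_angle b - ?m)"
        using pr_rot[OF that(1)] e other[OF that(2,3)] proj_bpv bp_bpv by metis
      also have "\<dots> = cos \<bar>bp_angle b - ?m\<bar>" by (rule cos_abs'[symmetric])
      finally have ce: "cos ?h = cos \<bar>bp_angle b - ?m\<bar>" .
      have gen: "\<And>x y z M. 0\<le>x \<Longrightarrow> x\<le>pi \<Longrightarrow> 0\<le>y \<Longrightarrow> y \<le> pi \<Longrightarrow> 0 \<le> z \<Longrightarrow> z \<le> pi
          \<Longrightarrow> 2*M = y + z \<Longrightarrow> \<bar>x - M\<bar> \<le> (pi::real)" by (auto simp: abs_le_iff)
      have "\<bar>bp_angle b - ?m\<bar> \<le> pi"
        using gen[of "bp_angle b" "bp_angle i" "bp_angle (i+1)" ?m] bp_angle_rng[of b] bp_angle_rng[of i]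
          bp_angle_rng[of "i+1"] half0[of "bp_angle i" "bp_angle (i+1)"] by blast
      then have "?h = \<bar>bp_angle b - ?m\<bar>"
        using h0 hpi cos_inj_pi[of ?h "\<bar>bp_angle b - ?m\<bar>"] ce by simp
      moreover have gen2: "\<And>x y z M h. h = \<bar>x - M\<bar> \<Longrightarrow> 2*M = y+z \<Longrightarrow> 2*h = z - y \<Longrightarrow> x = y \<or> x = (z::real)"
        by (smt (verit))
      moreover have "2 * ?h = bp_angle (i+1) - bp_angle i" by simp
      ultimately have "bp_angle b = bp_angle i \<or> bp_angle b = bp_angle (i+1)"
        using half0[of "bp_angle i" "bp_angle (i+1)"] by blast
      then show False using that(2) bp_angle_inj by blast
    qed
    have pair: "?c i \<noteq> ?c (i+1)"
      using rot_pair_ne[OF h0 hpi, of ?m "pi * t"] rot[of i] rot[of "i+1"] ai ai1 by simp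
    have inj: "inj_on ?c {1..n}"
    proof (rule inj_onI)
      fix a b assume ab: "a \<in> {1..n}" "b \<in> {1..n}" "?c a = ?c b"
      show "a = b"
      proof (cases "a \<in> {i, i+1}")
        case True
        show ?thesis
        proof (cases "b \<in> {i, i+1}")
          case True
          with \<open>a \<in> {i, i+1}\<close> ab(3) pair show ?thesis by auto
        next
          case False
          with True ab ne show ?thesis by blast
        qed
      next
        case False
        show ?thesis
        proof (cases "b \<in> {i, i+1}")
          case True
          with False ab ne show ?thesis by metis
        next
          case False
          with \<open>a \<notin> {i, i+1}\<close> ab other show ?thesis by (metis bp_eq_iff)
        qed
      qed
    qed
    show ?thesis using S Z inj by (simp add: conf_def)
  qed
  have st: "pathstart (sgp n i) = base {1..n}"
    using i by (auto simp: pathstart_def sgp_def fun_eq_iff rot0 bp_bpv base_def)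
  have m2: "2 * ?m - bp_angle i = bp_angle (i+1)" "2 * ?m - bp_angle (i+1) = bp_angle i"
    by (rule half3, rule half4)
  have f1: "pathfinish (sgp n i) i = bp (i+1)"
  proof -
    have "pathfinish (sgp n i) i = rot_eq ?m pi (bp_angle i)" by (simp add: pathfinish_def sgp_def)
    also have "\<dots> = bp (i+1)" by (simp only: rotpi m2 bp_bpv)
    finally show ?thesis .
  qed
  have f2: "pathfinish (sgp n i) (i+1) = bp i"
  proof -
    have "pathfinish (sgp n i) (i+1) = rot_eq ?m pi (bp_angle (i+1))" by (simp add: pathfinish_def sgp_def)
    also have "\<dots> = bp i" by (simp only: rotpi m2 bp_bpv)
    finally show ?thesis .
  qed
  have f3: "a \<notin> {i, i+1} \<Longrightarrow> a \<in> {1..n} \<Longrightarrow> pathfinish (sgp n i) a = bp a" for a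
    by (simp add: pathfinish_def sgp_def base_def)
  have fi: "\<forall>a\<in>{1..n}. pathfinish (sgp n i) a \<in> range bp"
  proof
    fix a assume "a \<in> {1..n}"
    then show "pathfinish (sgp n i) a \<in> range bp"
      using f1 f2 f3[of a] by (cases "a \<in> {i, i+1}") auto
  qed
  show ?thesis
    unfolding pbraid_rep_def using cont conf st fi by (auto simp: path_image_def)
qed

definition tau :: "nat \<Rightarrow> nat \<Rightarrow> nat" where
  "tau i a = (if a = i then i + 1 else if a = i + 1 then i else a)"

lemma sgp_fin:
  assumes i: "1 \<le> i" "i + 1 \<le> n" and a: "a \<in> {1..n}"
  shows "fin (sgp n i) a = tau i a"
proof -
  let ?m = "(bp_angle i + bp_angle (i+1)) / 2"
  have m2: "2 * ?m - bp_angle i = bp_angle (i+1)" "2 * ?m - bp_angle (i+1) = bp_angle i"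
    by (rule half3, rule half4)
  have f1: "pathfinish (sgp n i) i = bp (i+1)"
  proof -
    have "pathfinish (sgp n i) i = rot_eq ?m pi (bp_angle i)" by (simp add: pathfinish_def sgp_def)
    also have "\<dots> = bp (i+1)" by (simp only: rotpi m2 bp_bpv)
    finally show ?thesis .
  qed
  have f2: "pathfinish (sgp n i) (i+1) = bp i"
  proof -
    have "pathfinish (sgp n i) (i+1) = rot_eq ?m pi (bp_angle (i+1))" by (simp add: pathfinish_def sgp_def)
    also have "\<dots> = bp i" by (simp only: rotpi m2 bp_bpv)
    finally show ?thesis .
  qed
  have "pathfinish (sgp n i) a = bp (tau i a)"
    using a f1 f2 by (auto simp: pathfinish_def sgp_def base_def tau_def)
  then show ?thesis by (simp add: fin_def)
qed




definition pmap :: "nat set \<Rightarrow> pth \<Rightarrow> nat \<Rightarrow> nat option" where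
  "pmap A \<gamma> = (\<lambda>a. if a \<in> A then Some (fin \<gamma> a) else None)"

definition cl :: "pth set \<Rightarrow> (nat \<Rightarrow> nat option) \<Rightarrow> bool" where
  "cl X m \<longleftrightarrow> (\<exists>\<gamma> A. pbraid_rep A \<gamma> \<and> X = pclass \<gamma> \<and> pmap A \<gamma> = m)"

definition pm_id :: "nat set \<Rightarrow> nat \<Rightarrow> nat option" where
  "pm_id X = (\<lambda>a. if a \<in> X then Some a else None)"

definition perm_m :: "nat \<Rightarrow> (nat \<Rightarrow> nat) \<Rightarrow> nat \<Rightarrow> nat option" where
  "perm_m n f = (\<lambda>a. if a \<in> {1..n} then Some (f a) else None)"

lemma pmap_pcomp:
  assumes r1: "pbraid_rep A \<gamma>" and r2: "pbraid_rep B \<delta>"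
  shows "pmap (pcomp_dom \<gamma> \<delta>) (pcomp \<gamma> \<delta>) = pmap B \<delta> \<circ>\<^sub>m pmap A \<gamma>"
proof (rule ext)
  fix a
  show "pmap (pcomp_dom \<gamma> \<delta>) (pcomp \<gamma> \<delta>) a = (pmap B \<delta> \<circ>\<^sub>m pmap A \<gamma>) a"
    using pcomp_dom_iff[OF r1 r2, of a] fin_pcomp[OF r1 r2, of a]
    by (auto simp: pmap_def map_comp_def)
qed

lemma cl_mult: "cl X m1 \<Longrightarrow> cl Y m2 \<Longrightarrow> cl (X \<cdot>\<^sub>p Y) (m2 \<circ>\<^sub>m m1)"
proof -
  assume "cl X m1" "cl Y m2"
  then obtain \<gamma> A \<delta> B where r1: "pbraid_rep A \<gamma>" and X: "X = pclass \<gamma>" and m1: "pmap A \<gamma> = m1"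
    and r2: "pbraid_rep B \<delta>" and Y: "Y = pclass \<delta>" and m2: "pmap B \<delta> = m2"
    unfolding cl_def by blast
  show ?thesis unfolding cl_def
  proof (intro exI conjI)
    show "pbraid_rep (pcomp_dom \<gamma> \<delta>) (pcomp \<gamma> \<delta>)" by (rule pcomp_rep[OF r1 r2])
    show "X \<cdot>\<^sub>p Y = pclass (pcomp \<gamma> \<delta>)" unfolding X Y by (rule pmult_pclass[OF r1 r2])
    show "pmap (pcomp_dom \<gamma> \<delta>) (pcomp \<gamma> \<delta>) = m2 \<circ>\<^sub>m m1" unfolding pmap_pcomp[OF r1 r2] m1 m2 ..
  qed
qed

lemma cl_idp: "finite A \<Longrightarrow> cl (pclass (idp A)) (pm_id A)"
  unfolding cl_def
proof (intro exI conjI)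
  assume "finite A"
  then show "pbraid_rep A (idp A)" by (rule rep_idp)
  show "pclass (idp A) = pclass (idp A)" ..
  show "pmap A (idp A) = pm_id A" by (auto simp: pmap_def pm_id_def fin_idp)
qed

lemma cl_pone: "cl (pone n) (pm_id {1..n})"
proof -
  have e: "pone n = pclass (idp {1..n})" unfolding pone_def idp_def ..
  have "cl (pclass (idp {1..n})) (pm_id {1..n})" by (rule cl_idp) simp
  then show ?thesis unfolding e .
qed

lemma cl_peps: "cl (peps n i) (pm_id ({1..n} - {i}))"
proof -
  have e: "peps n i = pclass (idp ({1..n} - {i}))" unfolding peps_def idp_def ..
  have "cl (pclass (idp ({1..n} - {i}))) (pm_id ({1..n} - {i}))" by (rule cl_idp) simp
  then show ?thesis unfolding e .
qed

lemma cl_psigma: "1 \<le> i \<Longrightarrow> i + 1 \<le> n \<Longrightarrow> cl (psigma n i) (perm_m n (tau i))"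
  unfolding cl_def psigma_sgp
proof (intro exI conjI)
  assume i: "1 \<le> i" "i + 1 \<le> n"
  show "pbraid_rep {1..n} (sgp n i)" by (rule sgp_rep[OF i])
  show "pclass (sgp n i) = pclass (sgp n i)" ..
  show "pmap {1..n} (sgp n i) = perm_m n (tau i)"
    by (auto simp: pmap_def perm_m_def sgp_fin[OF i] fun_eq_iff)
qed

lemma cl_pprod:
  assumes "\<And>r. r \<in> set rs \<Longrightarrow> cl (F r) (M r)"
  shows "cl (pprod n (map F rs)) (foldl (\<lambda>m r. M r \<circ>\<^sub>m m) (pm_id {1..n}) rs)"
  using assms
proof (induction rs rule: rev_induct)
  case Nil
  show ?case using cl_pone[of n] by (simp only: pprod_def list.map foldl_Nil)
next
  case (snoc x xs)
  then have "cl (pprod n (map F xs)) (foldl (\<lambda>m r. M r \<circ>\<^sub>m m) (pm_id {1..n}) xs)" by auto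
  moreover have "cl (F x) (M x)" using snoc by auto
  ultimately show ?case by (simp add: pprod_def cl_mult)
qed

lemma perm_comp: "(\<And>a. a \<in> {1..n} \<Longrightarrow> f a \<in> {1..n}) \<Longrightarrow> perm_m n g \<circ>\<^sub>m perm_m n f = perm_m n (g \<circ> f)"
  by (auto simp: perm_m_def map_comp_def fun_eq_iff)

lemma foldl_perm:
  assumes "\<And>r a. r \<in> set rs \<Longrightarrow> a \<in> {1..n} \<Longrightarrow> G r a \<in> {1..n}"
    and "\<And>a. a \<in> {1..n} \<Longrightarrow> f0 a \<in> {1..n}"
  shows "foldl (\<lambda>m r. perm_m n (G r) \<circ>\<^sub>m m) (perm_m n f0) rs = perm_m n (foldl (\<lambda>f r. G r \<circ> f) f0 rs)"
  using assms
proof (induction rs arbitrary: f0)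
  case Nil then show ?case by simp
next
  case (Cons r rs)
  have f1: "perm_m n (G r) \<circ>\<^sub>m perm_m n f0 = perm_m n (G r \<circ> f0)" using Cons.prems(2) by (rule perm_comp)
  have f2: "foldl (\<lambda>m r. perm_m n (G r) \<circ>\<^sub>m m) (perm_m n (G r \<circ> f0)) rs
      = perm_m n (foldl (\<lambda>f r. G r \<circ> f) (G r \<circ> f0) rs)"
    by (rule Cons.IH) (use Cons.prems in auto)
  show ?case by (simp only: foldl_Cons f1 f2)
qed

lemma foldl_shift:
  fixes G :: "'a \<Rightarrow> 'b \<Rightarrow> 'b" and f0 :: "'b \<Rightarrow> 'b"
  shows "foldl (\<lambda>f r. G r \<circ> f) f0 rs = foldl (\<lambda>f r. G r \<circ> f) id rs \<circ> f0"
proof (induction rs arbitrary: f0)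
  case Nil then show ?case by simp
next
  case (Cons r rs)
  have a: "foldl (\<lambda>f r. G r \<circ> f) f0 (r#rs) = foldl (\<lambda>f r. G r \<circ> f) id rs \<circ> (G r \<circ> f0)"
    unfolding foldl_Cons by (rule Cons.IH)
  have b: "foldl (\<lambda>f r. G r \<circ> f) id (r#rs) = foldl (\<lambda>f r. G r \<circ> f) id rs \<circ> (G r \<circ> id)"
    unfolding foldl_Cons by (rule Cons.IH)
  show ?case unfolding a b by (simp only: o_assoc comp_id)
qed

lemma pm_id_perm: "pm_id {1..n} = perm_m n id"
  by (simp add: pm_id_def perm_m_def fun_eq_iff)

lemma cl_pprod_perm:
  assumes "\<And>r. r \<in> set rs \<Longrightarrow> cl (F r) (perm_m n (G r))"
    and "\<And>r a. r \<in> set rs \<Longrightarrow> a \<in> {1..n} \<Longrightarrow> G r a \<in> {1..n}"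
  shows "cl (pprod n (map F rs)) (perm_m n (foldl (\<lambda>f r. G r \<circ> f) id rs))"
proof -
  have a: "cl (pprod n (map F rs)) (foldl (\<lambda>m r. perm_m n (G r) \<circ>\<^sub>m m) (pm_id {1..n}) rs)"
    by (rule cl_pprod) (rule assms(1))
  have b: "foldl (\<lambda>m r. perm_m n (G r) \<circ>\<^sub>m m) (perm_m n id) rs = perm_m n (foldl (\<lambda>f r. G r \<circ> f) id rs)"
    by (rule foldl_perm) (use assms(2) in auto)
  show ?thesis using a unfolding pm_id_perm b .
qed

section \<open>Combinatorics of blocks\<close>

definition dd :: "nat \<Rightarrow> nat \<Rightarrow> nat \<Rightarrow> nat" where
  "dd i r a = (if a = i + 1 then r else if r \<le> a \<and> a \<le> i then a + 1 else a)"

definition uu :: "nat \<Rightarrow> nat \<Rightarrow> nat \<Rightarrow> nat" where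
  "uu j r a = (if a = r then j + 1 else if r + 1 \<le> a \<and> a \<le> j + 1 then a - 1 else a)"

lemma dd_foldl: "r \<le> i + 1 \<Longrightarrow> foldl (\<lambda>f s. tau s \<circ> f) id (rev [r..<i+1]) = dd i r"
proof (induction i)
  case 0
  then show ?case by (cases r) (auto simp: fun_eq_iff dd_def tau_def)
next
  case (Suc i)
  show ?case
  proof (cases "r \<le> i + 1")
    case True
    have eql: "rev [r..<Suc i + 1] = Suc i # rev [r..<i+1]" using True by simp
    have "foldl (\<lambda>f s. tau s \<circ> f) id (rev [r..<Suc i+1]) = foldl (\<lambda>f s. tau s \<circ> f) (tau (Suc i) \<circ> id) (rev [r..<i+1])"
      by (simp only: eql foldl_Cons)
    also have "\<dots> = foldl (\<lambda>f s. tau s \<circ> f) id (rev [r..<i+1]) \<circ> (tau (Suc i) \<circ> id)"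
      by (rule foldl_shift)
    also have "\<dots> = dd i r \<circ> tau (Suc i)" by (simp only: Suc.IH[OF True] comp_id)
    also have "\<dots> = dd (Suc i) r" using True by (auto simp: fun_eq_iff dd_def tau_def)
    finally show ?thesis .
  next
    case False
    then have "r = Suc i + 1" using Suc.prems by simp
    then show ?thesis by (auto simp: fun_eq_iff dd_def)
  qed
qed

lemma uu_foldl: "r \<le> j + 1 \<Longrightarrow> foldl (\<lambda>f s. tau s \<circ> f) id [r..<j+1] = uu j r"
proof (induction j)
  case 0
  then show ?case by (cases r) (auto simp: fun_eq_iff uu_def tau_def)
next
  case (Suc j)
  show ?case
  proof (cases "r \<le> j + 1")
    case True
    have eql: "[r..<Suc j + 1] = [r..<j+1] @ [Suc j]" using True by simp
    have "foldl (\<lambda>f s. tau s \<circ> f) id [r..<Suc j+1] = tau (Suc j) \<circ> uu j r"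
      by (simp only: eql foldl_append foldl_Cons foldl_Nil Suc.IH[OF True])
    also have "\<dots> = uu (Suc j) r" using True by (auto simp: fun_eq_iff uu_def tau_def)
    finally show ?thesis .
  next
    case False
    then have "r = Suc j + 1" using Suc.prems by simp
    then show ?thesis by (auto simp: fun_eq_iff uu_def)
  qed
qed

lemma tau_range: "1 \<le> s \<Longrightarrow> s + 1 \<le> n \<Longrightarrow> a \<in> {1..n} \<Longrightarrow> tau s a \<in> {1..n}"
  by (auto simp: tau_def)

lemma cl_desc:
  assumes "1 \<le> r" "r \<le> i + 1" "i + 1 \<le> n"
  shows "cl (desc_block n i r) (perm_m n (dd i r))"
proof -
  have "cl (pprod n (map (psigma n) (rev [r..<i+1]))) (perm_m n (foldl (\<lambda>f s. tau s \<circ> f) id (rev [r..<i+1])))"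
    by (rule cl_pprod_perm) (use assms in \<open>auto intro: cl_psigma simp: tau_def\<close>)
  then show ?thesis using dd_foldl[OF assms(2)] by (simp add: desc_block_def)
qed

lemma cl_asc:
  assumes "1 \<le> r" "r \<le> j + 1" "j + 1 \<le> n"
  shows "cl (asc_block n r j) (perm_m n (uu j r))"
proof -
  have "cl (pprod n (map (psigma n) [r..<j+1])) (perm_m n (foldl (\<lambda>f s. tau s \<circ> f) id [r..<j+1]))"
    by (rule cl_pprod_perm) (use assms in \<open>auto intro: cl_psigma simp: tau_def\<close>)
  then show ?thesis using uu_foldl[OF assms(2)] by (simp add: asc_block_def)
qed

lemma sorted_nth_ge: "sorted_wrt (<) (xs::nat list) \<Longrightarrow> m < length xs \<Longrightarrow> m \<le> xs ! m"
proof (induction m)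
  case 0 then show ?case by simp
next
  case (Suc m)
  then have "xs ! m < xs ! Suc m" using sorted_wrt_nth_less[of "(<)" xs m "Suc m"] by simp
  with Suc show ?case by simp
qed

definition piI :: "nat list \<Rightarrow> nat \<Rightarrow> nat \<Rightarrow> nat" where
  "piI I m = foldl (\<lambda>f r. dd (I ! (r - 1)) r \<circ> f) id [1..<m+1]"

definition rhoJ :: "nat list \<Rightarrow> nat \<Rightarrow> nat \<Rightarrow> nat" where
  "rhoJ J m = foldl (\<lambda>f r. uu (J ! (r - 1)) r \<circ> f) id (rev [1..<m+1])"

lemma piI_Suc: "piI I (Suc m) = dd (I ! m) (Suc m) \<circ> piI I m"
  by (simp add: piI_def)

lemma rhoJ_Suc: "rhoJ J (Suc m) = rhoJ J m \<circ> uu (J ! m) (Suc m)"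
proof -
  have "rev [1..<Suc m + 1] = Suc m # rev [1..<m+1]" by simp
  then show ?thesis
    using foldl_shift[of "\<lambda>r. uu (J ! (r - 1)) r" "uu (J ! m) (Suc m)" "rev [1..<m+1]"]
    by (simp add: rhoJ_def)
qed

lemma piI_props:
  assumes s: "sorted_wrt (<) I"
  shows "m \<le> length I \<Longrightarrow> (\<forall>r<m. piI I m (I ! r + 1) = r + 1) \<and> (\<forall>a. (\<forall>r<m. I ! r + 1 < a) \<longrightarrow> piI I m a = a)"
proof (induction m)
  case 0 then show ?case by (simp add: piI_def)
next
  case (Suc m)
  then have IH: "\<forall>r<m. piI I m (I ! r + 1) = r + 1" "\<forall>a. (\<forall>r<m. I ! r + 1 < a) \<longrightarrow> piI I m a = a" by auto
  have lt: "r < m \<Longrightarrow> I ! r < I ! m" for r using sorted_wrt_nth_less[OF s, of r m] Suc.prems by simp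
  have ge: "m \<le> I ! m" using sorted_nth_ge[OF s] Suc.prems by simp
  have A: "piI I (Suc m) (I ! r + 1) = r + 1" if "r < Suc m" for r
  proof (cases "r = m")
    case True
    have "piI I m (I ! m + 1) = I ! m + 1" using IH(2) lt by fastforce
    then show ?thesis using True by (simp add: piI_Suc dd_def)
  next
    case False
    then have "r < m" using that by simp
    then show ?thesis using IH(1) lt[of r] ge by (simp add: piI_Suc dd_def)
  qed
  have B: "piI I (Suc m) a = a" if "\<forall>r<Suc m. I ! r + 1 < a" for a
  proof -
    have "piI I m a = a" using IH(2) that by auto
    moreover have "I ! m + 1 < a" using that by auto
    ultimately show ?thesis by (simp add: piI_Suc dd_def)
  qed
  show ?case using A B by blast
qed

lemma rhoJ_props:
  assumes s: "sorted_wrt (<) J"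
  shows "m \<le> length J \<Longrightarrow> (\<forall>r<m. rhoJ J m (r + 1) = J ! r + 1) \<and> (\<forall>a. (\<forall>r<m. J ! r + 1 < a) \<longrightarrow> rhoJ J m a = a)"
proof (induction m)
  case 0 then show ?case by (simp add: rhoJ_def)
next
  case (Suc m)
  then have IH: "\<forall>r<m. rhoJ J m (r + 1) = J ! r + 1" "\<forall>a. (\<forall>r<m. J ! r + 1 < a) \<longrightarrow> rhoJ J m a = a" by auto
  have lt: "r < m \<Longrightarrow> J ! r < J ! m" for r using sorted_wrt_nth_less[OF s, of r m] Suc.prems by simp
  have ge: "m \<le> J ! m" using sorted_nth_ge[OF s] Suc.prems by simp
  have A: "rhoJ J (Suc m) (r + 1) = J ! r + 1" if "r < Suc m" for r
  proof (cases "r = m")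
    case True
    have "rhoJ J m (J ! m + 1) = J ! m + 1" using IH(2) lt by fastforce
    then show ?thesis using True by (simp add: rhoJ_Suc uu_def)
  next
    case False
    then have "r < m" using that by simp
    then show ?thesis using IH(1) by (simp add: rhoJ_Suc uu_def)
  qed
  have B: "rhoJ J (Suc m) a = a" if "\<forall>r<Suc m. J ! r + 1 < a" for a
  proof -
    have "J ! m + 1 < a" using that by auto
    then have "uu (J ! m) (Suc m) a = a" using ge by (simp add: uu_def)
    moreover have "rhoJ J m a = a" using IH(2) that by auto
    ultimately show ?thesis by (simp add: rhoJ_Suc)
  qed
  show ?case using A B by blast
qed




section \<open>Class-level algebra\<close>

definition Cls :: "pth set set" where
  "Cls = {X. \<exists>\<gamma> A. pbraid_rep A \<gamma> \<and> X = pclass \<gamma>}"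

lemma Cls_pclass: "pbraid_rep A \<gamma> \<Longrightarrow> pclass \<gamma> \<in> Cls"
  unfolding Cls_def by blast

lemma Cls_mult: "X \<in> Cls \<Longrightarrow> Y \<in> Cls \<Longrightarrow> X \<cdot>\<^sub>p Y \<in> Cls"
proof -
  assume "X \<in> Cls" "Y \<in> Cls"
  then obtain \<gamma> A \<delta> B where r1: "pbraid_rep A \<gamma>" "X = pclass \<gamma>" and r2: "pbraid_rep B \<delta>" "Y = pclass \<delta>"
    unfolding Cls_def by blast
  show ?thesis using pmult_pclass[OF r1(1) r2(1)] pcomp_rep[OF r1(1) r2(1)] r1(2) r2(2)
    by (simp add: Cls_pclass)
qed

lemma Cls_assoc: "X \<in> Cls \<Longrightarrow> Y \<in> Cls \<Longrightarrow> Z \<in> Cls \<Longrightarrow> (X \<cdot>\<^sub>p Y) \<cdot>\<^sub>p Z = X \<cdot>\<^sub>p (Y \<cdot>\<^sub>p Z)"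
proof -
  assume "X \<in> Cls" "Y \<in> Cls" "Z \<in> Cls"
  then obtain \<gamma> A \<delta> B \<epsilon> C where r1: "pbraid_rep A \<gamma>" "X = pclass \<gamma>" and r2: "pbraid_rep B \<delta>" "Y = pclass \<delta>"
    and r3: "pbraid_rep C \<epsilon>" "Z = pclass \<epsilon>"
    unfolding Cls_def by blast
  have r12: "pbraid_rep (pcomp_dom \<gamma> \<delta>) (pcomp \<gamma> \<delta>)" by (rule pcomp_rep[OF r1(1) r2(1)])
  have r23: "pbraid_rep (pcomp_dom \<delta> \<epsilon>) (pcomp \<delta> \<epsilon>)" by (rule pcomp_rep[OF r2(1) r3(1)])
  have "(X \<cdot>\<^sub>p Y) \<cdot>\<^sub>p Z = pclass (pcomp (pcomp \<gamma> \<delta>) \<epsilon>)"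
    unfolding r1(2) r2(2) r3(2) pmult_pclass[OF r1(1) r2(1)] pmult_pclass[OF r12 r3(1)] ..
  also have "\<dots> = pclass (pcomp \<gamma> (pcomp \<delta> \<epsilon>))" by (rule pcomp_assoc[OF r1(1) r2(1) r3(1)])
  also have "\<dots> = X \<cdot>\<^sub>p (Y \<cdot>\<^sub>p Z)"
    unfolding r1(2) r2(2) r3(2) pmult_pclass[OF r2(1) r3(1)] pmult_pclass[OF r1(1) r23] ..
  finally show ?thesis .
qed

lemma cl_Cls: "cl X m \<Longrightarrow> X \<in> Cls"
  unfolding cl_def Cls_def by blast

lemma chain_dom:
  assumes r1: "pbraid_rep A \<gamma>" and r2: "pbraid_rep B \<delta>" and sub: "fin \<gamma> ` A \<subseteq> B"
  shows "pcomp_dom \<gamma> \<delta> = A" "fin (pcomp \<gamma> \<delta>) ` A = fin \<delta> ` fin \<gamma> ` A"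
proof -
  show D: "pcomp_dom \<gamma> \<delta> = A" using pcomp_dom_iff[OF r1 r2] sub by auto
  have "a \<in> A \<Longrightarrow> fin (pcomp \<gamma> \<delta>) a = fin \<delta> (fin \<gamma> a)" for a
    using fin_pcomp[OF r1 r2] D by blast
  then show "fin (pcomp \<gamma> \<delta>) ` A = fin \<delta> ` fin \<gamma> ` A" by (auto simp: image_image)
qed

lemma pclass_eq_rep:
  assumes r1: "pbraid_rep A \<gamma>" and r2: "pbraid_rep A' \<psi>" and e: "pclass \<gamma> = pclass \<psi>"
  shows "A = A'" "fin \<gamma> ` A = fin \<psi> ` A'"
proof -
  have "\<psi> \<in> pclass \<gamma>" using pclass_self[OF r2] e by simp
  then have h: "homotopic_paths (conf A) \<gamma> \<psi>" using pclass_memD[OF _ r1] by blast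
  have "pbraid_rep A \<psi>" by (rule hom_rep[OF r1 h])
  then show AA: "A = A'" using rep_unique r2 by blast
  have "pathfinish \<gamma> = pathfinish \<psi>" using homotopic_paths_imp_pathfinish[OF h] .
  then have "fin \<gamma> = fin \<psi>" by (simp add: fin_def fun_eq_iff)
  then show "fin \<gamma> ` A = fin \<psi> ` A'" using AA by simp
qed

lemma cl_repE:
  assumes "cl X m"
  obtains \<gamma> A where "pbraid_rep A \<gamma>" "X = pclass \<gamma>" "\<And>a. a \<in> A \<longleftrightarrow> m a \<noteq> None"
    "\<And>a. a \<in> A \<Longrightarrow> m a = Some (fin \<gamma> a)"
  using assms unfolding cl_def pmap_def by force

lemma cl_perm_inj: "cl X (perm_m n f) \<Longrightarrow> inj_on f {1..n}"
proof -
  assume "cl X (perm_m n f)"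
  then obtain \<gamma> A where r: "pbraid_rep A \<gamma>" and d: "\<And>a. a \<in> A \<longleftrightarrow> perm_m n f a \<noteq> None"
    and v: "\<And>a. a \<in> A \<Longrightarrow> perm_m n f a = Some (fin \<gamma> a)" by (rule cl_repE) blast
  have A: "A = {1..n}"
  proof (rule set_eqI)
    fix a show "a \<in> A \<longleftrightarrow> a \<in> {1..n}" using d[of a] by (simp add: perm_m_def)
  qed
  have "a \<in> {1..n} \<Longrightarrow> f a = fin \<gamma> a" for a using v[of a] A by (simp add: perm_m_def)
  then have "inj_on f {1..n} = inj_on (fin \<gamma>) {1..n}" by (rule inj_on_cong)
  with rep_fin_inj[OF r] A show ?thesis by simp
qed

lemma set_map_Suc: "set (map Suc xs) = {xs ! r + 1 | r. r < length xs}"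
proof -
  have "set (map Suc xs) = Suc ` set xs" by (rule set_map)
  also have "set xs = {xs ! i | i. i < length xs}" by (rule set_conv_nth)
  finally show ?thesis by auto
qed

definition Lb :: "nat \<Rightarrow> nat \<Rightarrow> nat list \<Rightarrow> pth set" where
  "Lb n k I = pprod n (map (\<lambda>r. desc_block n (I ! (r - 1)) r) [1..<k+1])"

definition Rb :: "nat \<Rightarrow> nat \<Rightarrow> nat list \<Rightarrow> pth set" where
  "Rb n k J = pprod n (map (\<lambda>r. asc_block n r (J ! (r - 1))) (rev [1..<k+1]))"

definition valid :: "nat \<Rightarrow> nat \<Rightarrow> nat list \<Rightarrow> bool" where
  "valid n k I \<longleftrightarrow> 1 \<le> n \<and> k \<le> n \<and> length I = k \<and> sorted_wrt (<) I \<and> (\<forall>i\<in>set I. i \<le> n - 1)"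

lemma nf_eq: "normal_form n k I J x = Lb n k I \<cdot>\<^sub>p peps_range n k \<cdot>\<^sub>p x \<cdot>\<^sub>p peps_range n k \<cdot>\<^sub>p Rb n k J"
  by (simp add: normal_form_def Lb_def Rb_def)

lemma valid_nth:
  assumes "valid n k I" "r \<in> {1..k}"
  shows "r \<le> I ! (r - 1) + 1" "I ! (r - 1) + 1 \<le> n"
proof -
  have s: "sorted_wrt (<) I" and l: "length I = k" and b: "\<forall>i\<in>set I. i \<le> n - 1" and n: "1 \<le> n"
    using assms(1) by (auto simp: valid_def)
  have "r - 1 < length I" using assms(2) l by auto
  then show "r \<le> I ! (r - 1) + 1" using sorted_nth_ge[OF s] by fastforce
  show "I ! (r - 1) + 1 \<le> n" using b nth_mem[OF \<open>r - 1 < length I\<close>] n by fastforce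
qed

lemma cl_L: "valid n k I \<Longrightarrow> cl (Lb n k I) (perm_m n (piI I k))"
  unfolding Lb_def piI_def
proof (rule cl_pprod_perm)
  assume v: "valid n k I"
  fix r assume "r \<in> set [1..<k+1]"
  then have r: "r \<in> {1..k}" by auto
  show "cl (desc_block n (I ! (r - 1)) r) (perm_m n (dd (I ! (r - 1)) r))"
    by (rule cl_desc) (use r valid_nth[OF v r] in auto)
  fix a assume "a \<in> {1..n}"
  then show "dd (I ! (r - 1)) r a \<in> {1..n}"
    using r valid_nth[OF v r] by (auto simp: dd_def)
qed

lemma cl_R: "valid n k J \<Longrightarrow> cl (Rb n k J) (perm_m n (rhoJ J k))"
  unfolding Rb_def rhoJ_def
proof (rule cl_pprod_perm)
  assume v: "valid n k J"
  fix r assume "r \<in> set (rev [1..<k+1])"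
  then have r: "r \<in> {1..k}" by auto
  show "cl (asc_block n r (J ! (r - 1))) (perm_m n (uu (J ! (r - 1)) r))"
    by (rule cl_asc) (use r valid_nth[OF v r] in auto)
  fix a assume "a \<in> {1..n}"
  then show "uu (J ! (r - 1)) r a \<in> {1..n}"
    using r valid_nth[OF v r] by (auto simp: uu_def)
qed

lemma foldl_pm_id:
  "Y \<subseteq> {1..n} \<Longrightarrow> foldl (\<lambda>m i. pm_id ({1..n} - {i}) \<circ>\<^sub>m m) (pm_id Y) xs = pm_id (Y - set xs)"
proof (induction xs arbitrary: Y)
  case Nil then show ?case by simp
next
  case (Cons i xs)
  have "pm_id ({1..n} - {i}) \<circ>\<^sub>m pm_id Y = pm_id (Y - {i})"
    using Cons.prems by (auto simp: pm_id_def map_comp_def fun_eq_iff)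
  moreover have "foldl (\<lambda>m i. pm_id ({1..n} - {i}) \<circ>\<^sub>m m) (pm_id (Y - {i})) xs = pm_id (Y - {i} - set xs)"
    by (rule Cons.IH) (use Cons.prems in auto)
  ultimately show ?case by (simp add: Diff_insert2[symmetric] insert_commute)
qed

lemma cl_E: "k \<le> n \<Longrightarrow> cl (peps_range n k) (pm_id {1..k})"
proof -
  assume k: "k \<le> n"
  have "cl (pprod n (map (peps n) [k+1..<n+1])) (foldl (\<lambda>m i. pm_id ({1..n} - {i}) \<circ>\<^sub>m m) (pm_id {1..n}) [k+1..<n+1])"
    by (rule cl_pprod) (rule cl_peps)
  moreover have "{1..n} - set [k+1..<n+1] = {1..k}" using k by auto
  ultimately show ?thesis unfolding peps_range_def foldl_pm_id[OF order_refl] by simp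
qed

lemma candP:
  assumes v: "valid n k I"
  obtains \<gamma>P where "pbraid_rep (set (map Suc I)) \<gamma>P" "fin \<gamma>P ` set (map Suc I) = {1..k}"
    "pclass \<gamma>P = Lb n k I \<cdot>\<^sub>p peps_range n k"
proof -
  have s: "sorted_wrt (<) I" and l: "length I = k" and b: "\<forall>i\<in>set I. i \<le> n - 1" and n: "1 \<le> n"
    and kn: "k \<le> n" using v by (auto simp: valid_def)
  let ?\<pi> = "piI I k"
  have clL: "cl (Lb n k I) (perm_m n ?\<pi>)" by (rule cl_L[OF v])
  have inj: "inj_on ?\<pi> {1..n}" by (rule cl_perm_inj[OF clL])
  have pv: "r < k \<Longrightarrow> ?\<pi> (I ! r + 1) = r + 1" for r using piI_props[OF s, of k] l by auto
  have Ir: "r < k \<Longrightarrow> I ! r + 1 \<in> {1..n}" for r using b nth_mem[of r I] l n by fastforce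
  have "cl (Lb n k I \<cdot>\<^sub>p peps_range n k) (pm_id {1..k} \<circ>\<^sub>m perm_m n ?\<pi>)"
    by (rule cl_mult[OF clL cl_E[OF kn]])
  then obtain \<gamma> A where r: "pbraid_rep A \<gamma>" and X: "Lb n k I \<cdot>\<^sub>p peps_range n k = pclass \<gamma>"
    and d: "\<And>a. a \<in> A \<longleftrightarrow> (pm_id {1..k} \<circ>\<^sub>m perm_m n ?\<pi>) a \<noteq> None"
    and vv: "\<And>a. a \<in> A \<Longrightarrow> (pm_id {1..k} \<circ>\<^sub>m perm_m n ?\<pi>) a = Some (fin \<gamma> a)"
    by (rule cl_repE) blast
  have d': "a \<in> A \<longleftrightarrow> a \<in> {1..n} \<and> ?\<pi> a \<in> {1..k}" for a
    using d[of a] by (cases "a \<in> {1..n}") (auto simp: pm_id_def perm_m_def map_comp_def)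
  have fv: "a \<in> A \<Longrightarrow> fin \<gamma> a = ?\<pi> a" for a
    using vv[of a] d'[of a] by (auto simp: pm_id_def perm_m_def map_comp_def)
  have SI: "set (map Suc I) = {I ! r + 1 | r. r < k}" using l set_map_Suc[of I] by simp
  have AI: "A = set (map Suc I)"
  proof
    show "A \<subseteq> set (map Suc I)"
    proof
      fix a assume a: "a \<in> A"
      then have a1: "a \<in> {1..n}" and s1: "?\<pi> a \<in> {1..k}" using d' by auto
      define r where "r = ?\<pi> a - 1"
      have rk: "r < k" and pr: "?\<pi> a = r + 1" using s1 by (auto simp: r_def)
      have "?\<pi> (I ! r + 1) = ?\<pi> a" using pv[OF rk] pr by simp
      then have "a = I ! r + 1" using inj a1 Ir[OF rk] by (auto dest: inj_onD)
      then show "a \<in> set (map Suc I)" using SI rk by blast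
    qed
    show "set (map Suc I) \<subseteq> A"
      using SI d' pv Ir by auto
  qed
  have FI: "fin \<gamma> ` A = {1..k}"
  proof
    show "fin \<gamma> ` A \<subseteq> {1..k}" using d' fv by auto
    show "{1..k} \<subseteq> fin \<gamma> ` A"
    proof
      fix s assume s1: "s \<in> {1..k}"
      then have rk: "s - 1 < k" by auto
      have "I ! (s - 1) + 1 \<in> A" using AI SI rk by blast
      moreover have "fin \<gamma> (I ! (s - 1) + 1) = s" using fv calculation pv[OF rk] s1 by auto
      ultimately show "s \<in> fin \<gamma> ` A" by force
    qed
  qed
  show ?thesis using that r AI FI X by auto
qed

lemma candQ:
  assumes v: "valid n k J"
  obtains \<gamma>Q where "pbraid_rep {1..k} \<gamma>Q" "fin \<gamma>Q ` {1..k} = set (map Suc J)"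
    "pclass \<gamma>Q = peps_range n k \<cdot>\<^sub>p Rb n k J"
proof -
  have s: "sorted_wrt (<) J" and l: "length J = k" and kn: "k \<le> n" using v by (auto simp: valid_def)
  let ?\<rho> = "rhoJ J k"
  have pv: "r < k \<Longrightarrow> ?\<rho> (r + 1) = J ! r + 1" for r using rhoJ_props[OF s, of k] l by auto
  have "cl (peps_range n k \<cdot>\<^sub>p Rb n k J) (perm_m n ?\<rho> \<circ>\<^sub>m pm_id {1..k})"
    by (rule cl_mult[OF cl_E[OF kn] cl_R[OF v]])
  then obtain \<gamma> A where r: "pbraid_rep A \<gamma>" and X: "peps_range n k \<cdot>\<^sub>p Rb n k J = pclass \<gamma>"
    and d: "\<And>a. a \<in> A \<longleftrightarrow> (perm_m n ?\<rho> \<circ>\<^sub>m pm_id {1..k}) a \<noteq> None"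
    and vv: "\<And>a. a \<in> A \<Longrightarrow> (perm_m n ?\<rho> \<circ>\<^sub>m pm_id {1..k}) a = Some (fin \<gamma> a)"
    by (rule cl_repE) blast
  have A: "A = {1..k}"
  proof (rule set_eqI)
    fix a show "a \<in> A \<longleftrightarrow> a \<in> {1..k}" using d[of a] kn by (simp add: pm_id_def perm_m_def map_comp_def)
  qed
  have fv: "a \<in> {1..k} \<Longrightarrow> fin \<gamma> a = ?\<rho> a" for a
    using vv[of a] A kn by (auto simp: pm_id_def perm_m_def map_comp_def)
  have SJ: "set (map Suc J) = {J ! r + 1 | r. r < k}" using l set_map_Suc[of J] by simp
  have FJ: "fin \<gamma> ` {1..k} = set (map Suc J)"
  proof
    show "fin \<gamma> ` {1..k} \<subseteq> set (map Suc J)"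
    proof
      fix c assume "c \<in> fin \<gamma> ` {1..k}"
      then obtain a where a: "a \<in> {1..k}" "c = fin \<gamma> a" by blast
      then have "c = J ! (a - 1) + 1" using fv pv[of "a - 1"] by auto
      then show "c \<in> set (map Suc J)" using SJ a by auto
    qed
    show "set (map Suc J) \<subseteq> fin \<gamma> ` {1..k}"
    proof
      fix c assume "c \<in> set (map Suc J)"
      then obtain r where r: "r < k" "c = J ! r + 1" using SJ by blast
      then have fc: "fin \<gamma> (r + 1) = c" using fv pv by auto
      show "c \<in> fin \<gamma> ` {1..k}" using fc r by (intro image_eqI[of c "fin \<gamma>" "r+1"]) auto
    qed
  qed
  show ?thesis using that r A FJ X by auto
qed




lemma Br_repE:
  assumes "x \<in> Br k"
  obtains \<gamma>x where "pbraid_rep {1..k} \<gamma>x" "x = pclass \<gamma>x" "fin \<gamma>x ` {1..k} \<subseteq> {1..k}"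
proof -
  from assms obtain \<gamma> where r: "pbraid_rep {1..k} \<gamma>" and f: "\<forall>a\<in>{1..k}. pathfinish \<gamma> a \<in> bp ` {1..k}"
    and x: "x = pclass \<gamma>" unfolding Br_def by blast
  have "fin \<gamma> a \<in> {1..k}" if "a \<in> {1..k}" for a
  proof -
    have "pathfinish \<gamma> a \<in> bp ` {1..k}" using f that by (rule bspec)
    then obtain c where c: "c \<in> {1..k}" "pathfinish \<gamma> a = bp c" by (rule imageE) simp
    then have "fin \<gamma> a = c" by (simp add: fin_def)
    with c show ?thesis by simp
  qed
  then show ?thesis using that r x by blast
qed

lemma Br_intro:
  assumes r: "pbraid_rep {1..k} \<psi>" and f: "fin \<psi> ` {1..k} \<subseteq> {1..k}"
  shows "pclass \<psi> \<in> Br k"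
proof -
  have "\<forall>a\<in>{1..k}. pathfinish \<psi> a \<in> bp ` {1..k}"
    using rep_fin[OF r] f by blast
  then show ?thesis unfolding Br_def using r by blast
qed

lemma nf_shape:
  assumes vI: "valid n k I" and vJ: "valid n k J"
    and P: "pclass \<gamma>P = Lb n k I \<cdot>\<^sub>p peps_range n k" and rP: "pbraid_rep AP \<gamma>P"
    and Q: "pclass \<gamma>Q = peps_range n k \<cdot>\<^sub>p Rb n k J"
    and x: "x \<in> Cls"
  shows "normal_form n k I J x = (pclass \<gamma>P \<cdot>\<^sub>p x) \<cdot>\<^sub>p pclass \<gamma>Q"
proof -
  have kn: "k \<le> n" using vI by (simp add: valid_def)
  have E: "peps_range n k \<in> Cls" by (rule cl_Cls[OF cl_E[OF kn]])
  have R: "Rb n k J \<in> Cls" by (rule cl_Cls[OF cl_R[OF vJ]])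
  have Px: "pclass \<gamma>P \<cdot>\<^sub>p x \<in> Cls" by (rule Cls_mult[OF Cls_pclass[OF rP] x])
  have "normal_form n k I J x = ((pclass \<gamma>P \<cdot>\<^sub>p x) \<cdot>\<^sub>p peps_range n k) \<cdot>\<^sub>p Rb n k J"
    unfolding nf_eq P ..
  also have "\<dots> = (pclass \<gamma>P \<cdot>\<^sub>p x) \<cdot>\<^sub>p (peps_range n k \<cdot>\<^sub>p Rb n k J)" by (rule Cls_assoc[OF Px E R])
  finally show ?thesis unfolding Q .
qed

lemma set_pred_Suc: "set (map Suc I) = A \<Longrightarrow> set I = (\<lambda>a. a - 1) ` A"
  by (auto simp: image_image)

theorem main:
  fixes n :: nat
  assumes "n \<ge> 1"
  shows "\<forall>\<beta>\<in>IBr n. \<exists>!(k, I, J, x).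
     k \<le> n \<and> length I = k \<and> length J = k \<and>
     sorted_wrt (<) I \<and> sorted_wrt (<) J \<and>
     (\<forall>i\<in>set I. i \<le> n - 1) \<and> (\<forall>j\<in>set J. j \<le> n - 1) \<and>
     x \<in> Br k \<and> \<beta> = normal_form n k I J x"
proof
  fix \<beta> assume "\<beta> \<in> IBr n"
  then obtain \<gamma> A where r: "pbraid_rep A \<gamma>" and An: "A \<subseteq> {1..n}"
    and fA: "\<forall>a\<in>A. pathfinish \<gamma> a \<in> bp ` {1..n}" and \<beta>: "\<beta> = pclass \<gamma>"
    unfolding IBr_def by blast
  define B where "B = fin \<gamma> ` A"
  have finA: "finite A" using r by (simp add: pbraid_rep_def)
  have finB: "finite B" using finA by (simp add: B_def)
  have Bn: "B \<subseteq> {1..n}"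
  proof
    fix b assume "b \<in> B"
    then obtain a where a: "a \<in> A" "b = fin \<gamma> a" by (auto simp: B_def)
    have "pathfinish \<gamma> a \<in> bp ` {1..n}" using fA a(1) by (rule bspec)
    then obtain c where c: "c \<in> {1..n}" "pathfinish \<gamma> a = bp c" by (rule imageE) simp
    then have "fin \<gamma> a = c" by (simp add: fin_def)
    then show "b \<in> {1..n}" using a c by simp
  qed
  have cardB: "card B = card A" unfolding B_def using rep_fin_inj[OF r] by (rule card_image)
  define k0 where "k0 = card A"
  define I0 where "I0 = sorted_list_of_set ((\<lambda>a. a - 1) ` A)"
  define J0 where "J0 = sorted_list_of_set ((\<lambda>a. a - 1) ` B)"
  have injA: "inj_on (\<lambda>a. a - 1) A"
  proof (rule inj_onI)
    fix x y assume "x \<in> A" "y \<in> A" "x - 1 = y - 1"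
    moreover have "1 \<le> x" "1 \<le> y" using An calculation by auto
    ultimately show "x = y" by simp
  qed
  have injB: "inj_on (\<lambda>a. a - 1) B"
  proof (rule inj_onI)
    fix x y assume "x \<in> B" "y \<in> B" "x - 1 = y - 1"
    moreover have "1 \<le> x" "1 \<le> y" using Bn calculation by auto
    ultimately show "x = y" by simp
  qed
  have setI0: "set I0 = (\<lambda>a. a - 1) ` A" using finA by (simp add: I0_def)
  have setJ0: "set J0 = (\<lambda>a. a - 1) ` B" using finB by (simp add: J0_def)
  have sI0: "sorted_wrt (<) I0" by (simp add: I0_def)
  have sJ0: "sorted_wrt (<) J0" by (simp add: J0_def)
  have lI0: "length I0 = k0" unfolding I0_def k0_def using card_image[OF injA] by simp
  have lJ0: "length J0 = k0" unfolding J0_def k0_def using card_image[OF injB] cardB by simp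
  have AI0: "set (map Suc I0) = A"
  proof -
    have "set (map Suc I0) = (\<lambda>a. Suc (a - 1)) ` A" using setI0 by (simp add: image_image)
    also have "\<dots> = A" using An by (force simp: image_iff)
    finally show ?thesis .
  qed
  have BJ0: "set (map Suc J0) = B"
  proof -
    have "set (map Suc J0) = (\<lambda>a. Suc (a - 1)) ` B" using setJ0 by (simp add: image_image)
    also have "\<dots> = B" using Bn by (force simp: image_iff)
    finally show ?thesis .
  qed
  have k0n: "k0 \<le> n" unfolding k0_def using card_mono[OF _ An] by simp
  have bI0: "\<forall>i\<in>set I0. i \<le> n - 1"
  proof
    fix i assume "i \<in> set I0"
    then obtain a where a: "a \<in> A" "i = a - 1" using setI0 by auto
    then have "a \<in> {1..n}" using An by blast
    then have "a - 1 \<le> n - 1" using diff_le_mono[of a n 1] by simp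
    then show "i \<le> n - 1" using a by simp
  qed
  have bJ0: "\<forall>j\<in>set J0. j \<le> n - 1"
  proof
    fix j assume "j \<in> set J0"
    then obtain a where a: "a \<in> B" "j = a - 1" using setJ0 by auto
    then have "a \<in> {1..n}" using Bn by blast
    then have "a - 1 \<le> n - 1" using diff_le_mono[of a n 1] by simp
    then show "j \<le> n - 1" using a by simp
  qed
  have vI: "valid n k0 I0" using assms k0n lI0 sI0 bI0 by (simp add: valid_def)
  have vJ: "valid n k0 J0" using assms k0n lJ0 sJ0 bJ0 by (simp add: valid_def)
  obtain \<gamma>P where rP0: "pbraid_rep (set (map Suc I0)) \<gamma>P" and fP0: "fin \<gamma>P ` set (map Suc I0) = {1..k0}"
    and P: "pclass \<gamma>P = Lb n k0 I0 \<cdot>\<^sub>p peps_range n k0"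
    by (rule candP[OF vI]) blast
  have rP: "pbraid_rep A \<gamma>P" and fP: "fin \<gamma>P ` A = {1..k0}" using rP0 fP0 AI0 by simp_all
  obtain \<gamma>Q where rQ: "pbraid_rep {1..k0} \<gamma>Q" and fQ0: "fin \<gamma>Q ` {1..k0} = set (map Suc J0)"
    and Q: "pclass \<gamma>Q = peps_range n k0 \<cdot>\<^sub>p Rb n k0 J0"
    by (rule candQ[OF vJ]) blast
  have fQ: "fin \<gamma>Q ` {1..k0} = B" using fQ0 BJ0 by simp
  define Pc where "Pc = pclass \<gamma>P"
  define Qc where "Qc = pclass \<gamma>Q"
  define Pi where "Pi = pclass (rinv A \<gamma>P)"
  define Qi where "Qi = pclass (rinv {1..k0} \<gamma>Q)"
  have rPi: "pbraid_rep {1..k0} (rinv A \<gamma>P)" using rep_rinv[OF rP] fP by simp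
  have rQi: "pbraid_rep B (rinv {1..k0} \<gamma>Q)" using rep_rinv[OF rQ] fQ by simp
  have CPc: "Pc \<in> Cls" unfolding Pc_def by (rule Cls_pclass[OF rP])
  have CQc: "Qc \<in> Cls" unfolding Qc_def by (rule Cls_pclass[OF rQ])
  have CPi: "Pi \<in> Cls" unfolding Pi_def by (rule Cls_pclass[OF rPi])
  have CQi: "Qi \<in> Cls" unfolding Qi_def by (rule Cls_pclass[OF rQi])
  have C\<beta>: "\<beta> \<in> Cls" unfolding \<beta> by (rule Cls_pclass[OF r])
  have PcPi: "Pc \<cdot>\<^sub>p Pi = pclass (idp A)"
    unfolding Pc_def Pi_def pmult_pclass[OF rP rPi] by (rule pcomp_rinv[OF rP])
  have PiPc: "Pi \<cdot>\<^sub>p Pc = pclass (idp {1..k0})"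
    unfolding Pc_def Pi_def pmult_pclass[OF rPi rP] using pcomp_linv[OF rP] fP by simp
  have QcQi: "Qc \<cdot>\<^sub>p Qi = pclass (idp {1..k0})"
    unfolding Qc_def Qi_def pmult_pclass[OF rQ rQi] by (rule pcomp_rinv[OF rQ])
  have QiQc: "Qi \<cdot>\<^sub>p Qc = pclass (idp B)"
    unfolding Qc_def Qi_def pmult_pclass[OF rQi rQ] using pcomp_linv[OF rQ] fQ by simp
  have finK: "finite {1..k0}" by simp
  have ridB: "\<beta> \<cdot>\<^sub>p pclass (idp B) = \<beta>"
    unfolding \<beta> pmult_pclass[OF r rep_idp[OF finB]] by (rule pcomp_rid[OF r finB]) (simp add: B_def)
  have lidA: "pclass (idp A) \<cdot>\<^sub>p \<beta> = \<beta>"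
    unfolding \<beta> pmult_pclass[OF rep_idp[OF finA] r] by (rule pcomp_lid[OF r])
  have Cid: "pclass (idp K) \<in> Cls" if "finite K" for K by (rule Cls_pclass[OF rep_idp[OF that]])
  define x0 where "x0 = (Pi \<cdot>\<^sub>p \<beta>) \<cdot>\<^sub>p Qi"
  have x0Br: "x0 \<in> Br k0"
  proof -
    let ?\<psi>1 = "pcomp (rinv A \<gamma>P) \<gamma>"
    have s1: "fin (rinv A \<gamma>P) ` {1..k0} \<subseteq> A"
    proof
      fix c assume "c \<in> fin (rinv A \<gamma>P) ` {1..k0}"
      then have "c \<in> fin (rinv A \<gamma>P) ` fin \<gamma>P ` A" unfolding fP .
      then obtain a where "a \<in> A" "c = fin (rinv A \<gamma>P) (fin \<gamma>P a)" by blast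
      then show "c \<in> A" using fin_rinv[OF rP] by simp
    qed
    have d1: "pcomp_dom (rinv A \<gamma>P) \<gamma> = {1..k0}" and f1: "fin ?\<psi>1 ` {1..k0} = fin \<gamma> ` fin (rinv A \<gamma>P) ` {1..k0}"
      using chain_dom[OF rPi r s1] by auto
    have r1: "pbraid_rep {1..k0} ?\<psi>1" using pcomp_rep[OF rPi r] d1 by simp
    have s2: "fin ?\<psi>1 ` {1..k0} \<subseteq> B" using f1 s1 by (auto simp: B_def)
    let ?\<psi>2 = "pcomp ?\<psi>1 (rinv {1..k0} \<gamma>Q)"
    have d2: "pcomp_dom ?\<psi>1 (rinv {1..k0} \<gamma>Q) = {1..k0}"
      and f2: "fin ?\<psi>2 ` {1..k0} = fin (rinv {1..k0} \<gamma>Q) ` fin ?\<psi>1 ` {1..k0}"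
      using chain_dom[OF r1 rQi s2] by auto
    have r2: "pbraid_rep {1..k0} ?\<psi>2" using pcomp_rep[OF r1 rQi] d2 by simp
    have s3: "fin (rinv {1..k0} \<gamma>Q) ` B \<subseteq> {1..k0}"
    proof
      fix c assume "c \<in> fin (rinv {1..k0} \<gamma>Q) ` B"
      then have "c \<in> fin (rinv {1..k0} \<gamma>Q) ` fin \<gamma>Q ` {1..k0}" unfolding fQ .
      then obtain a where "a \<in> {1..k0}" "c = fin (rinv {1..k0} \<gamma>Q) (fin \<gamma>Q a)" by blast
      then show "c \<in> {1..k0}" using fin_rinv[OF rQ] by simp
    qed
    have "fin ?\<psi>2 ` {1..k0} \<subseteq> {1..k0}" using f2 s2 s3 by blast
    then have "pclass ?\<psi>2 \<in> Br k0" by (rule Br_intro[OF r2])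
    moreover have "x0 = pclass ?\<psi>2"
      unfolding x0_def Pi_def Qi_def \<beta> pmult_pclass[OF rPi r] pmult_pclass[OF r1 rQi] ..
    ultimately show ?thesis by simp
  qed
  have CBr: "y \<in> Cls" if "y \<in> Br k" for y k
    using that by (rule Br_repE) (auto intro: Cls_pclass)
  have nf0: "normal_form n k0 I0 J0 x0 = \<beta>"
  proof -
    have "normal_form n k0 I0 J0 x0 = (Pc \<cdot>\<^sub>p x0) \<cdot>\<^sub>p Qc"
      unfolding Pc_def Qc_def by (rule nf_shape[OF vI vJ P rP Q CBr[OF x0Br]])
    also have "\<dots> = (Pc \<cdot>\<^sub>p (Pi \<cdot>\<^sub>p (\<beta> \<cdot>\<^sub>p Qi))) \<cdot>\<^sub>p Qc"
      unfolding x0_def using Cls_assoc[OF CPi C\<beta> CQi] by simp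
    also have "\<dots> = ((Pc \<cdot>\<^sub>p Pi) \<cdot>\<^sub>p (\<beta> \<cdot>\<^sub>p Qi)) \<cdot>\<^sub>p Qc"
      using Cls_assoc[OF CPc CPi Cls_mult[OF C\<beta> CQi]] by simp
    also have "\<dots> = (Pc \<cdot>\<^sub>p Pi) \<cdot>\<^sub>p ((\<beta> \<cdot>\<^sub>p Qi) \<cdot>\<^sub>p Qc)"
      by (rule Cls_assoc[OF Cls_mult[OF CPc CPi] Cls_mult[OF C\<beta> CQi] CQc])
    also have "\<dots> = (Pc \<cdot>\<^sub>p Pi) \<cdot>\<^sub>p (\<beta> \<cdot>\<^sub>p (Qi \<cdot>\<^sub>p Qc))"
      using Cls_assoc[OF C\<beta> CQi CQc] by simp
    also have "\<dots> = \<beta>" unfolding PcPi QiQc ridB lidA ..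
    finally show ?thesis .
  qed
  show "\<exists>!(k, I, J, x).
     k \<le> n \<and> length I = k \<and> length J = k \<and>
     sorted_wrt (<) I \<and> sorted_wrt (<) J \<and>
     (\<forall>i\<in>set I. i \<le> n - 1) \<and> (\<forall>j\<in>set J. j \<le> n - 1) \<and>
     x \<in> Br k \<and> \<beta> = normal_form n k I J x"
  proof (rule ex1I[of _ "(k0, I0, J0, x0)"])
    show "case (k0, I0, J0, x0) of (k, I, J, x) \<Rightarrow>
     k \<le> n \<and> length I = k \<and> length J = k \<and>
     sorted_wrt (<) I \<and> sorted_wrt (<) J \<and>
     (\<forall>i\<in>set I. i \<le> n - 1) \<and> (\<forall>j\<in>set J. j \<le> n - 1) \<and>
     x \<in> Br k \<and> \<beta> = normal_form n k I J x"
      using k0n lI0 lJ0 sI0 sJ0 bI0 bJ0 x0Br nf0 by simp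
  next
    fix p assume h: "case p of (k, I, J, x) \<Rightarrow>
     k \<le> n \<and> length I = k \<and> length J = k \<and>
     sorted_wrt (<) I \<and> sorted_wrt (<) J \<and>
     (\<forall>i\<in>set I. i \<le> n - 1) \<and> (\<forall>j\<in>set J. j \<le> n - 1) \<and>
     x \<in> Br k \<and> \<beta> = normal_form n k I J x"
    obtain k I J x where p: "p = (k, I, J, x)" by (cases p) auto
    have kn: "k \<le> n" and lI: "length I = k" and lJ: "length J = k" and sI: "sorted_wrt (<) I"
      and sJ: "sorted_wrt (<) J" and bI: "\<forall>i\<in>set I. i \<le> n - 1" and bJ: "\<forall>j\<in>set J. j \<le> n - 1"
      and xB: "x \<in> Br k" and \<beta>nf: "\<beta> = normal_form n k I J x"
      using h p by auto
    have vI': "valid n k I" using assms kn lI sI bI by (simp add: valid_def)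
    have vJ': "valid n k J" using assms kn lJ sJ bJ by (simp add: valid_def)
    obtain \<gamma>x where rx: "pbraid_rep {1..k} \<gamma>x" and xe: "x = pclass \<gamma>x" and fx: "fin \<gamma>x ` {1..k} \<subseteq> {1..k}"
      by (rule Br_repE[OF xB]) blast
    have fx': "fin \<gamma>x ` {1..k} = {1..k}"
      by (rule endo_inj_surj[OF _ fx rep_fin_inj[OF rx]]) simp
    obtain \<gamma>P' where rP': "pbraid_rep (set (map Suc I)) \<gamma>P'" and fP': "fin \<gamma>P' ` set (map Suc I) = {1..k}"
      and P': "pclass \<gamma>P' = Lb n k I \<cdot>\<^sub>p peps_range n k"
      by (rule candP[OF vI']) blast
    obtain \<gamma>Q' where rQ': "pbraid_rep {1..k} \<gamma>Q'" and fQ': "fin \<gamma>Q' ` {1..k} = set (map Suc J)"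
      and Q': "pclass \<gamma>Q' = peps_range n k \<cdot>\<^sub>p Rb n k J"
      by (rule candQ[OF vJ']) blast
    let ?\<psi>1 = "pcomp \<gamma>P' \<gamma>x"
    have d1: "pcomp_dom \<gamma>P' \<gamma>x = set (map Suc I)"
      and f1: "fin ?\<psi>1 ` set (map Suc I) = fin \<gamma>x ` fin \<gamma>P' ` set (map Suc I)"
      using chain_dom[OF rP' rx] fP' by auto
    have r1: "pbraid_rep (set (map Suc I)) ?\<psi>1" using pcomp_rep[OF rP' rx] d1 by simp
    have f1': "fin ?\<psi>1 ` set (map Suc I) = {1..k}" using f1 fP' fx' by simp
    let ?\<psi>2 = "pcomp ?\<psi>1 \<gamma>Q'"
    have d2: "pcomp_dom ?\<psi>1 \<gamma>Q' = set (map Suc I)"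
      and f2: "fin ?\<psi>2 ` set (map Suc I) = fin \<gamma>Q' ` fin ?\<psi>1 ` set (map Suc I)"
      using chain_dom[OF r1 rQ'] f1' by auto
    have r2: "pbraid_rep (set (map Suc I)) ?\<psi>2" using pcomp_rep[OF r1 rQ'] d2 by simp
    have "\<beta> = (pclass \<gamma>P' \<cdot>\<^sub>p x) \<cdot>\<^sub>p pclass \<gamma>Q'"
      unfolding \<beta>nf by (rule nf_shape[OF vI' vJ' P' rP' Q' CBr[OF xB]])
    also have "\<dots> = pclass ?\<psi>2" unfolding xe pmult_pclass[OF rP' rx] pmult_pclass[OF r1 rQ'] ..
    finally have e: "pclass \<gamma> = pclass ?\<psi>2" unfolding \<beta> .
    have AI: "A = set (map Suc I)" and BJ: "fin \<gamma> ` A = fin ?\<psi>2 ` set (map Suc I)"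
      using pclass_eq_rep[OF r r2 e] by auto
    have BJ': "B = set (map Suc J)" using BJ f2 f1' fQ' by (simp add: B_def)
    have II: "I = I0"
      using strict_sorted_equal[OF sI0 sI] set_pred_Suc[OF AI[symmetric]] setI0 by simp
    have JJ: "J = J0"
      using strict_sorted_equal[OF sJ0 sJ] set_pred_Suc[OF BJ'[symmetric]] setJ0 by simp
    have kk: "k = k0" using lI lI0 II by simp
    have CX: "x \<in> Cls" by (rule CBr[OF xB])
    have \<beta>2: "\<beta> = (Pc \<cdot>\<^sub>p x) \<cdot>\<^sub>p Qc"
      unfolding \<beta>nf II JJ kk Pc_def Qc_def by (rule nf_shape[OF vI vJ P rP Q CX])
    have rx0: "pbraid_rep {1..k0} \<gamma>x" and fx0: "fin \<gamma>x ` {1..k0} \<subseteq> {1..k0}" using rx fx kk by auto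
    have xrid: "x \<cdot>\<^sub>p pclass (idp {1..k0}) = x"
      unfolding xe pmult_pclass[OF rx0 rep_idp[OF finK]] by (rule pcomp_rid[OF rx0 finK fx0])
    have xlid: "pclass (idp {1..k0}) \<cdot>\<^sub>p x = x"
      unfolding xe pmult_pclass[OF rep_idp[OF finK] rx0] by (rule pcomp_lid[OF rx0])
    have "x0 = (Pi \<cdot>\<^sub>p ((Pc \<cdot>\<^sub>p x) \<cdot>\<^sub>p Qc)) \<cdot>\<^sub>p Qi" unfolding x0_def \<beta>2[symmetric] ..
    also have "\<dots> = Pi \<cdot>\<^sub>p (((Pc \<cdot>\<^sub>p x) \<cdot>\<^sub>p Qc) \<cdot>\<^sub>p Qi)"
      by (rule Cls_assoc[OF CPi Cls_mult[OF Cls_mult[OF CPc CX] CQc] CQi])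
    also have "\<dots> = Pi \<cdot>\<^sub>p ((Pc \<cdot>\<^sub>p x) \<cdot>\<^sub>p (Qc \<cdot>\<^sub>p Qi))"
      using Cls_assoc[OF Cls_mult[OF CPc CX] CQc CQi] by simp
    also have "\<dots> = Pi \<cdot>\<^sub>p (Pc \<cdot>\<^sub>p x)" unfolding QcQi
      using Cls_assoc[OF CPc CX Cid[OF finK]] xrid by simp
    also have "\<dots> = (Pi \<cdot>\<^sub>p Pc) \<cdot>\<^sub>p x" using Cls_assoc[OF CPi CPc CX] by simp
    also have "\<dots> = x" unfolding PiPc xlid ..
    finally have "x = x0" by simp
    then show "p = (k0, I0, J0, x0)" using p II JJ kk by simp
  qed
qed


theorem theorem5p3:
  fixes n :: nat
  assumes "n \<ge> 1"
  shows "\<forall>\<beta>\<in>IBr n. \<exists>!(k, I, J, x).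
     k \<le> n \<and> length I = k \<and> length J = k \<and>
     sorted_wrt (<) I \<and> sorted_wrt (<) J \<and>
     (\<forall>i\<in>set I. i \<le> n - 1) \<and> (\<forall>j\<in>set J. j \<le> n - 1) \<and>
     x \<in> Br k \<and> \<beta> = normal_form n k I J x"
    using main[OF assms] .

end
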